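(* Let $0<\delta<1$ and $\phi_h(u)=\max\{1-u,0\}$. Suppose $\rho$ satisfies the Tsybakov noise condition with exponent $q$, $\log\mathcal N(\mathcal B_{K,1},\varepsilon)\le\mathcal A\psi(\varepsilon)$ for all $\varepsilon>0$ (with $\mathcal A>0$, $\psi:\mathbf R_+\to\mathbf R_+$ decreasing and continuous), and there are $\theta>0$, $C_4>0$ with $\big[\frac{\mathcal A\psi(\sqrt\lambda m^{-\theta})+1}{m}\big]^{\frac{q+1}{q+2}}\ge C_4m^{-\theta}$. Then with probability at least $1-\frac\delta2$, $$\mathcal S_2^{\phi_h}(D,\lambda)\le C_q\big\{\mathcal E^{\phi_h}(\pi f_{D,\lambda})-\mathcal E^{\phi_h}(f_\rho^{\phi_h})\big\}+C_7\Big[\frac{\mathcal A\psi(\sqrt\lambda m^{-\theta})+1}{m}\Big]^{\frac{q+1}{q+2}}\log\frac4\delta,$$ where $\mathcal S_2^{\phi_h}(D,\lambda)=[\mathcal E^{\phi_h}(\pi f_{D,\lambda})-\mathcal E^{\phi_h}(f_\rho^{\phi_h})]-[\mathcal E_D^{\phi_h}(\pi f_{D,\lambda})-\mathcal E_D^{\phi_h}(f_\rho^{\phi_h})]$, $C_q=\frac{q}{2q+2}\cdot2^{\frac{q+1}{2q}}$, and $C_7$ is a constant independent of $m,\lambda,\delta$.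
   Context: Setting: $X=[0,1]^d$, $Y=\{-1,1\}$, $\rho$ a Borel probability measure on $Z=X\times Y$ with marginal $\rho_X$; $\eta(x)=\mathbf P[y=1|x]$; $D=\{(x_i,y_i)\}_{i=1}^m$ i.i.d. from $\rho$. $\mathcal E^{\phi}(f)=\int_Z\phi(yf(x))d\rho$, $\mathcal E_D^\phi(f)=\frac1m\sum_i\phi(y_if(x_i))$; $f_\rho^{\phi_h}(x)$ a minimizer over $t$ of $\int_Y\phi_h(yt)d\rho(y|x)$. Tsybakov noise condition with exponent $q\in[0,\infty]$: there is $\hat c_q>0$ with $\rho_X(\{x:|2\eta(x)-1|\le\hat c_qt\})\le t^q$ for all $t>0$. $K$ is a Mercer kernel on $X$ with RKHS $(\mathcal H_K,\|\cdot\|_K)$, $\mathcal B_{K,R}=\{f\in\mathcal H_K:\|f\|_K\le R\}$, $\mathcal N(\mathcal G,\varepsilon)$ the sup-norm covering number in $C(X)$. $f_{D,\lambda}=\arg\min_{f\in\mathcal H_K}\{\frac1m\sum_i\phi_h(y_if(x_i))+\lambda\|f\|_K^2\}$; $\pi f(x)=\max\{-1,\min\{1,f(x)\}\}$. *)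

theory Defs
  imports "HOL-Probability.Probability"
begin

definition unit_cube :: "(real ^ 'd) set" where
  "unit_cube = {x. \<forall>i. 0 \<le> x $ i \<and> x $ i \<le> 1}"

definition hinge :: "real \<Rightarrow> real" where
  "hinge u = max (1 - u) 0"

definition proj1 :: "('a \<Rightarrow> real) \<Rightarrow> 'a \<Rightarrow> real" where
  "proj1 f x = max (-1) (min 1 (f x))"

definition mercer_kernel :: "'a::topological_space set \<Rightarrow> ('a \<Rightarrow> 'a \<Rightarrow> real) \<Rightarrow> bool" where
  "mercer_kernel X K \<longleftrightarrow>
     continuous_on (X \<times> X) (\<lambda>(x, y). K x y) \<and>
     (\<forall>x\<in>X. \<forall>y\<in>X. K x y = K y x) \<and>
     (\<forall>n (c::nat \<Rightarrow> real) xs. (\<forall>i<n. xs i \<in> X) \<longrightarrow>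
        0 \<le> (\<Sum>i<n. \<Sum>j<n. c i * c j * K (xs i) (xs j)))"

text \<open>RKHS norm: for f in H_K, ||f||_K is the supremum of |sum c_i f(x_i)| over all
  g = sum c_i K_{x_i} in the span with ||g||_K^2 = sum c_i c_j K(x_i,x_j) <= 1
  (Riesz / density of the span); f belongs to H_K iff this supremum is finite.
  Functions on X are represented as functions vanishing outside X.\<close>
definition rkhs_vals :: "'a set \<Rightarrow> ('a \<Rightarrow> 'a \<Rightarrow> real) \<Rightarrow> ('a \<Rightarrow> real) \<Rightarrow> real set" where
  "rkhs_vals X K f = {\<bar>\<Sum>i<n. c i * f (xs i)\<bar> | (n::nat) (c::nat \<Rightarrow> real) xs.
      (\<forall>i<n. xs i \<in> X) \<and> (\<Sum>i<n. \<Sum>j<n. c i * c j * K (xs i) (xs j)) \<le> 1}"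

definition in_rkhs :: "'a set \<Rightarrow> ('a \<Rightarrow> 'a \<Rightarrow> real) \<Rightarrow> ('a \<Rightarrow> real) \<Rightarrow> bool" where
  "in_rkhs X K f \<longleftrightarrow> (\<forall>x. x \<notin> X \<longrightarrow> f x = 0) \<and> bdd_above (rkhs_vals X K f)"

definition rkhs_norm :: "'a set \<Rightarrow> ('a \<Rightarrow> 'a \<Rightarrow> real) \<Rightarrow> ('a \<Rightarrow> real) \<Rightarrow> real" where
  "rkhs_norm X K f = Sup (rkhs_vals X K f)"

definition rkhs_ball :: "'a set \<Rightarrow> ('a \<Rightarrow> 'a \<Rightarrow> real) \<Rightarrow> real \<Rightarrow> ('a \<Rightarrow> real) set" where
  "rkhs_ball X K R = {f. in_rkhs X K f \<and> rkhs_norm X K f \<le> R}"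

definition covering_number :: "'a::topological_space set \<Rightarrow> ('a \<Rightarrow> real) set \<Rightarrow> real \<Rightarrow> enat" where
  "covering_number X G eps = Inf {enat (card C) | C. finite C \<and>
      (\<forall>c\<in>C. continuous_on X c) \<and>
      (\<forall>g\<in>G. \<exists>c\<in>C. \<forall>x\<in>X. \<bar>g x - c x\<bar> \<le> eps)}"

definition gen_error :: "('x \<times> real) measure \<Rightarrow> (real \<Rightarrow> real) \<Rightarrow> ('x \<Rightarrow> real) \<Rightarrow> real" where
  "gen_error \<rho> \<phi> f = (\<integral>z. \<phi> (snd z * f (fst z)) \<partial>\<rho>)"

definition emp_error :: "nat \<Rightarrow> (nat \<Rightarrow> 'x \<times> real) \<Rightarrow> (real \<Rightarrow> real) \<Rightarrow> ('x \<Rightarrow> real) \<Rightarrow> real" where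
  "emp_error m D \<phi> f = (\<Sum>i<m. \<phi> (snd (D i) * f (fst (D i)))) / real m"

definition tsybakov :: "'x measure \<Rightarrow> 'x set \<Rightarrow> ('x \<Rightarrow> real) \<Rightarrow> real \<Rightarrow> bool" where
  "tsybakov \<rho>X X \<eta> q \<longleftrightarrow> (\<exists>c>0. \<forall>t>0.
      measure \<rho>X {x\<in>X. \<bar>2 * \<eta> x - 1\<bar> \<le> c * t} \<le> t powr q)"

end

theory Submission
  imports Defs
begin


lemma exp_le_quad:
  fixes u :: real assumes "u \<le> 1" shows "exp u \<le> 1 + u + u\<^sup>2"
proof (cases "0 \<le> u")
  case True then show ?thesis using exp_bound assms by blast
next
  case False
  have "1 - u \<le> exp (- u)" using exp_ge_add_one_self[of "-u"] by simp
  then have "exp u \<le> 1 / (1 - u)" using False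
    by (simp add: exp_minus field_simps)
  also have "\<dots> \<le> 1 + u + u\<^sup>2"
  proof -
    have "1 \<le> (1 - u) * (1 + u + u\<^sup>2)" using False
      by (simp add: algebra_simps power2_eq_square power3_eq_cube)
         (rule mult_nonpos_nonneg, simp_all)
    then show ?thesis using False by (simp add: divide_le_eq mult.commute)
  qed
  finally show ?thesis .
qed

lemma bernstein_iid:
  fixes M :: "'a measure" and W :: "'a \<Rightarrow> real"
  assumes P: "prob_space M" and Wm: "W \<in> borel_measurable M"
    and Wb: "\<And>z. z \<in> space M \<Longrightarrow> W z \<le> b"
    and Wbd: "\<And>z. z \<in> space M \<Longrightarrow> \<bar>W z\<bar> \<le> Bd"
    and E0: "integral\<^sup>L M W = 0" and V: "integral\<^sup>L M (\<lambda>z. (W z)\<^sup>2) \<le> V"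
    and Vp: "0 < V" and bp: "0 < b" and ep: "0 < \<epsilon>"
  shows "measure (PiM {..<m} (\<lambda>_. M)) {D \<in> space (PiM {..<m} (\<lambda>_. M)). real m * \<epsilon> \<le> (\<Sum>i<m. W (D i))}
           \<le> exp (- (real m * min (\<epsilon>/(2*b)) (\<epsilon>\<^sup>2/(4*V))))"
proof -
  interpret M: prob_space M by (fact P)
  interpret PP: product_prob_space "\<lambda>_. M" "{..<m}" by unfold_locales
  interpret Pi: prob_space "PiM {..<m} (\<lambda>_. M)" by (rule prob_space_PiM) (simp add: P)
  define s where "s = min (1/b) (\<epsilon>/(2*V))"
  have sp: "0 < s" using bp ep Vp by (simp add: s_def)
  have sb: "s * b \<le> 1" using bp by (simp add: s_def min_def field_simps)
  have sV: "s * V \<le> \<epsilon>/2" using Vp by (simp add: s_def min_def field_simps)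
  have Wm2[measurable]: "W \<in> borel_measurable M" by (fact Wm)
  have intW: "integrable M W"
    by (rule M.integrable_const_bound[where B=Bd]) (use Wbd in auto)
  have intW2: "integrable M (\<lambda>z. (W z)\<^sup>2)"
  proof (rule M.integrable_const_bound[where B="Bd\<^sup>2"])
    show "AE x in M. norm ((W x)\<^sup>2) \<le> Bd\<^sup>2"
    proof (rule AE_I2)
      fix x assume "x \<in> space M"
      then have "\<bar>W x\<bar> \<le> Bd" by (rule Wbd)
      then have "\<bar>W x\<bar>^2 \<le> Bd^2" by (rule power_mono) simp
      then show "norm ((W x)\<^sup>2) \<le> Bd\<^sup>2" by simp
    qed
  qed simp
  have inte: "integrable M (\<lambda>z. exp (s * W z))"
    by (rule M.integrable_const_bound[where B="exp (s*Bd)"])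
       (use Wbd sp in \<open>auto intro!: mult_left_mono simp: abs_le_iff\<close>)
  have pw: "exp (s * W z) \<le> 1 + s * W z + s\<^sup>2 * (W z)\<^sup>2" if "z \<in> space M" for z
  proof -
    have "s * W z \<le> s * b" using Wb[OF that] sp by (simp add: mult_left_mono)
    with sb have "s * W z \<le> 1" by simp
    from exp_le_quad[OF this] show ?thesis by (simp add: power_mult_distrib)
  qed
  have "integral\<^sup>L M (\<lambda>z. exp (s * W z)) \<le> integral\<^sup>L M (\<lambda>z. 1 + s * W z + s\<^sup>2 * (W z)\<^sup>2)"
    by (rule integral_mono) (use inte intW intW2 pw in auto)
  also have "\<dots> = 1 + s * integral\<^sup>L M W + s\<^sup>2 * integral\<^sup>L M (\<lambda>z. (W z)\<^sup>2)"
    using intW intW2 by (simp add: M.prob_space)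
  also have "\<dots> \<le> 1 + s\<^sup>2 * V" using E0 V by (simp add: mult_left_mono)
  also have "\<dots> \<le> exp (s\<^sup>2 * V)" using exp_ge_add_one_self[of "s\<^sup>2*V"] by simp
  finally have Eexp: "integral\<^sup>L M (\<lambda>z. exp (s * W z)) \<le> exp (s\<^sup>2 * V)" .
  have Eexp0: "0 \<le> integral\<^sup>L M (\<lambda>z. exp (s * W z))" by simp
  let ?P = "PiM {..<m} (\<lambda>_. M)"
  let ?F = "\<lambda>D. (\<Prod>i<m. exp (s * W (D i)))"
  have Fm[measurable]: "?F \<in> borel_measurable ?P" by measurable
  have intF: "integrable ?P ?F"
    by (rule PP.product_integrable_prod) (use inte in auto)
  have EF: "integral\<^sup>L ?P ?F = (integral\<^sup>L M (\<lambda>z. exp (s * W z))) ^ m"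
    using PP.product_integral_prod[of "{..<m}" "\<lambda>_ z. exp (s * W z)"] inte by simp
  have set_eq: "{D \<in> space ?P. real m * \<epsilon> \<le> (\<Sum>i<m. W (D i))} = {D \<in> space ?P. exp (s * (real m * \<epsilon>)) \<le> ?F D}"
    using sp by (auto simp: exp_sum[symmetric] simp flip: sum_distrib_left)
  have "measure ?P {D \<in> space ?P. exp (s * (real m * \<epsilon>)) \<le> ?F D} \<le> integral\<^sup>L ?P ?F / exp (s * (real m * \<epsilon>))"
    by (rule integral_Markov_inequality_measure[where A="space ?P"]) (use intF in \<open>auto intro!: AE_I2 prod_nonneg\<close>)
  also have "\<dots> \<le> exp (s\<^sup>2 * V) ^ m / exp (s * (real m * \<epsilon>))"
    unfolding EF by (intro divide_right_mono power_mono Eexp Eexp0) simp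
  also have "\<dots> = exp (real m * (s\<^sup>2 * V - s * \<epsilon>))"
    by (simp add: exp_of_nat_mult[symmetric] exp_diff[symmetric] algebra_simps)
  also have "\<dots> \<le> exp (- (real m * min (\<epsilon>/(2*b)) (\<epsilon>\<^sup>2/(4*V))))"
  proof -
    have "s\<^sup>2 * V - s * \<epsilon> \<le> - (s * \<epsilon> / 2)"
    proof -
      have "s\<^sup>2 * V = s * (s * V)" by (simp add: power2_eq_square)
      also have "\<dots> \<le> s * (\<epsilon>/2)" using sV sp by (simp add: mult_left_mono)
      finally show ?thesis by simp
    qed
    moreover have "s * \<epsilon> / 2 = min (\<epsilon>/(2*b)) (\<epsilon>\<^sup>2/(4*V))"
      using ep bp Vp by (simp add: s_def min_def field_simps power2_eq_square)
    ultimately have "s\<^sup>2 * V - s * \<epsilon> \<le> - min (\<epsilon>/(2*b)) (\<epsilon>\<^sup>2/(4*V))" by simp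
    then have "real m * (s\<^sup>2 * V - s * \<epsilon>) \<le> real m * (- min (\<epsilon>/(2*b)) (\<epsilon>\<^sup>2/(4*V)))"
      by (rule mult_left_mono) simp
    then show ?thesis by simp
  qed
  finally show ?thesis unfolding set_eq .
qed



lemma fst_borel_meas[measurable]: "fst \<in> (borel :: ('a::second_countable_topology \<times> 'b::second_countable_topology) measure) \<rightarrow>\<^sub>M borel"
  by (intro borel_measurable_continuous_onI continuous_on_fst continuous_on_id)
lemma snd_borel_meas[measurable]: "snd \<in> (borel :: ('a::second_countable_topology \<times> 'b::second_countable_topology) measure) \<rightarrow>\<^sub>M borel"
  by (intro borel_measurable_continuous_onI continuous_on_snd continuous_on_id)

lemma times_borel[measurable]:
  fixes A :: "'a::second_countable_topology set" and B :: "'b::second_countable_topology set"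
  assumes "A \<in> sets borel" "B \<in> sets borel"
  shows "A \<times> B \<in> sets borel"
proof -
  have "A \<times> B = (fst -` A \<inter> space borel) \<inter> (snd -` B \<inter> space borel)" by auto
  then show ?thesis
    using measurable_sets[OF fst_borel_meas assms(1)] measurable_sets[OF snd_borel_meas assms(2)]
    by (metis sets.Int)
qed

lemma fst_vimage_borel[measurable]:
  "A \<in> sets borel \<Longrightarrow> fst -` (A::'a::second_countable_topology set) \<in> sets (borel :: ('a \<times> 'b::second_countable_topology) measure)"
  using measurable_sets[OF fst_borel_meas, of A] by simp

lemma closed_unit_cube: "closed (unit_cube :: (real^'d) set)"
proof -
  have eq: "unit_cube = (\<Inter>i. {x::real^'d. 0 \<le> x $ i} \<inter> {x. x $ i \<le> 1})"
    by (auto simp: unit_cube_def)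
  show ?thesis unfolding eq
    by (intro closed_INT closed_Int ballI closed_Collect_le continuous_intros)
qed

lemma unit_cube_borel[measurable]: "(unit_cube :: (real^'d) set) \<in> sets borel"
  using closed_unit_cube by (rule borel_closed)

lemma hinge_nonneg: "0 \<le> hinge u" by (simp add: hinge_def)

lemma proj1_bound: "\<bar>proj1 f x\<bar> \<le> 1" by (simp add: proj1_def)
lemma proj1_lip: "\<bar>proj1 f x - proj1 g x\<bar> \<le> \<bar>f x - g x\<bar>" by (simp add: proj1_def)

lemma bnd_int:
  fixes f :: "'a \<Rightarrow> real"
  assumes "finite_measure M" "f \<in> borel_measurable M" "\<And>x. \<bar>f x\<bar> \<le> B"
  shows "integrable M f"
  using assms by (intro finite_measure.integrable_const_bound[where B=B]) (auto intro!: AE_I2)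

lemma abs_mult_le1: "\<bar>a\<bar> \<le> 1 \<Longrightarrow> \<bar>b::real\<bar> \<le> B \<Longrightarrow> \<bar>a * b\<bar> \<le> B"
  by (simp add: abs_mult) (meson abs_ge_zero mult_left_le_one_le order_trans)

locale hs =
  fixes \<rho> :: "((real ^ 'd) \<times> real) measure"
    and \<eta> :: "real ^ 'd \<Rightarrow> real"
    and f\<rho> :: "real ^ 'd \<Rightarrow> real"
  assumes prob: "prob_space \<rho>"
    and sets_\<rho>: "sets \<rho> = sets borel"
    and support: "measure \<rho> (unit_cube \<times> {-1, 1}) = 1"
    and \<eta>_meas[measurable]: "\<eta> \<in> borel_measurable borel"
    and \<eta>_range: "\<forall>x\<in>unit_cube. 0 \<le> \<eta> x \<and> \<eta> x \<le> 1"
    and \<eta>_cond: "\<forall>A\<in>sets borel. measure \<rho> (A \<times> {1}) =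
                   (\<integral>x. indicator A x * \<eta> x \<partial>(distr \<rho> borel fst))"
    and f\<rho>_meas[measurable]: "f\<rho> \<in> borel_measurable borel"
    and f\<rho>_min: "\<forall>x\<in>unit_cube. \<forall>t.
                   \<eta> x * hinge (f\<rho> x) + (1 - \<eta> x) * hinge (- f\<rho> x)
                     \<le> \<eta> x * hinge t + (1 - \<eta> x) * hinge (- t)"
begin

interpretation P: prob_space \<rho> by (fact prob)

definition "\<rho>X = distr \<rho> borel fst"
definition "fs = proj1 f\<rho>"

lemma space_\<rho>: "space \<rho> = UNIV"
  using sets_eq_imp_space_eq[OF sets_\<rho>] by simp

lemma meas_\<rho>[measurable_cong]: "measurable \<rho> N = measurable borel N"
  by (rule measurable_cong_sets[OF sets_\<rho> refl])

lemma sets_\<rho>_iff[measurable_cong]: "sets \<rho> = sets borel" by (fact sets_\<rho>)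

lemma fst_meas_\<rho>[measurable]: "fst \<in> \<rho> \<rightarrow>\<^sub>M borel" by (simp add: meas_\<rho>)

lemma prob_\<rho>X: "prob_space \<rho>X"
  unfolding \<rho>X_def by (rule P.prob_space_distr) simp

interpretation PX: prob_space \<rho>X by (fact prob_\<rho>X)

lemma sets_\<rho>X[measurable_cong]: "sets \<rho>X = sets borel" by (simp add: \<rho>X_def)
lemma space_\<rho>X: "space \<rho>X = UNIV" by (simp add: \<rho>X_def)
lemma meas_\<rho>X[measurable_cong]: "measurable \<rho>X N = measurable borel N"
  by (rule measurable_cong_sets[OF sets_\<rho>X refl])

lemma AE_support: "AE z in \<rho>. z \<in> unit_cube \<times> {-1, 1}"
  by (rule P.AE_prob_1) (fact support)

lemma AE_X: "AE x in \<rho>X. x \<in> unit_cube"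
proof -
  have "measure \<rho>X unit_cube = measure \<rho> (fst -` unit_cube \<inter> space \<rho>)"
    unfolding \<rho>X_def by (rule measure_distr) auto
  also have "\<dots> \<ge> measure \<rho> (unit_cube \<times> {-1, 1})"
    using measurable_sets[OF fst_borel_meas unit_cube_borel]
    by (intro P.finite_measure_mono) (auto simp: space_\<rho> sets_\<rho>)
  finally have "measure \<rho>X unit_cube \<ge> 1" using support by simp
  then have "measure \<rho>X unit_cube = 1" using PX.prob_le_1 by (meson order_antisym)
  then show ?thesis by (rule PX.AE_prob_1)
qed

lemma integral_fst:
  fixes w :: "real^'d \<Rightarrow> real"
  assumes [measurable]: "w \<in> borel_measurable borel"
  shows "(\<integral>z. w (fst z) \<partial>\<rho>) = (\<integral>x. w x \<partial>\<rho>X)"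
  unfolding \<rho>X_def by (rule integral_distr[OF fst_meas_\<rho> assms, symmetric])

lemma int_\<rho>: fixes f :: "_ \<Rightarrow> real"
  assumes "f \<in> borel_measurable borel" "\<And>x. \<bar>f x\<bar> \<le> B" shows "integrable \<rho> f"
  using assms by (intro bnd_int[where B=B]) (auto simp: meas_\<rho> P.finite_measure_axioms)

lemma int_\<rho>X_AE: fixes f :: "_ \<Rightarrow> real"
  assumes "f \<in> borel_measurable borel" "\<And>x. x \<in> unit_cube \<Longrightarrow> \<bar>f x\<bar> \<le> B" shows "integrable \<rho>X f"
proof (rule PX.integrable_const_bound[where B=B])
  show "AE x in \<rho>X. norm (f x) \<le> B" using AE_X by eventually_elim (simp add: assms(2))
qed (use assms(1) in \<open>simp add: meas_\<rho>X\<close>)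

lemma int_\<rho>X: fixes f :: "_ \<Rightarrow> real"
  assumes "f \<in> borel_measurable borel" "\<And>x. \<bar>f x\<bar> \<le> B" shows "integrable \<rho>X f"
  using assms by (intro bnd_int[where B=B]) (auto simp: meas_\<rho>X PX.finite_measure_axioms)

lemma integral_y1:
  fixes w :: "real^'d \<Rightarrow> real"
  assumes wm[measurable]: "w \<in> borel_measurable borel"
  shows "(\<integral>z. indicator {z. snd z = 1} z * w (fst z) \<partial>\<rho>) = (\<integral>x. (indicator unit_cube x * \<eta> x) * w x \<partial>\<rho>X)"
proof -
  define \<mu> where "\<mu> = distr (density \<rho> (\<lambda>z. ennreal (indicator {z. snd z = 1} z))) borel fst"
  define \<nu> where "\<nu> = density \<rho>X (\<lambda>x. indicator unit_cube x * \<eta> x)"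
  have g_nn: "0 \<le> indicator unit_cube x * \<eta> x" for x
    using \<eta>_range by (auto simp: indicator_def)
  have "\<mu> = \<nu>"
  proof (rule measure_eqI)
    show "sets \<mu> = sets \<nu>" by (simp add: \<mu>_def \<nu>_def sets_\<rho>X)
  next
    fix A assume "A \<in> sets \<mu>"
    then have A[measurable]: "A \<in> sets borel" by (simp add: \<mu>_def)
    have AY: "A \<times> {1} \<in> sets \<rho>" by (simp add: sets_\<rho>)
    have "emeasure \<mu> A = emeasure (density \<rho> (\<lambda>z. ennreal (indicator {z. snd z = 1} z))) (fst -` A \<inter> space \<rho>)"
      unfolding \<mu>_def by (subst emeasure_distr) (auto simp: space_\<rho>)
    also have "\<dots> = (\<integral>\<^sup>+z. ennreal (indicator {z. snd z = 1} z) * indicator (fst -` A \<inter> space \<rho>) z \<partial>\<rho>)"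
      by (subst emeasure_density) (auto simp: space_\<rho> sets_\<rho> fst_vimage_borel)
    also have "\<dots> = (\<integral>\<^sup>+z. indicator (A \<times> {1}) z \<partial>\<rho>)"
      by (intro nn_integral_cong) (auto simp: indicator_def space_\<rho>)
    also have "\<dots> = emeasure \<rho> (A \<times> {1})"
      using AY by simp
    also have "\<dots> = ennreal (\<integral>x. indicator A x * \<eta> x \<partial>\<rho>X)"
      using \<eta>_cond A by (simp add: P.emeasure_eq_measure \<rho>X_def)
    also have "(\<integral>x. indicator A x * \<eta> x \<partial>\<rho>X) = (\<integral>x. indicator A x * (indicator unit_cube x * \<eta> x) \<partial>\<rho>X)"
      by (intro integral_cong_AE) (use AE_X in \<open>auto simp: indicator_def\<close>)
    also have "ennreal \<dots> = (\<integral>\<^sup>+x. ennreal (indicator A x * (indicator unit_cube x * \<eta> x)) \<partial>\<rho>X)"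
    proof (rule nn_integral_eq_integral[symmetric])
      show "integrable \<rho>X (\<lambda>x. indicator A x * (indicator unit_cube x * \<eta> x))"
        by (rule int_\<rho>X[where B=1]) (use \<eta>_range in \<open>auto simp: indicator_def\<close>)
      show "AE x in \<rho>X. 0 \<le> indicator A x * (indicator unit_cube x * \<eta> x)"
        using g_nn by (auto intro!: AE_I2)
    qed
    also have "\<dots> = emeasure \<nu> A"
      unfolding \<nu>_def using A
      by (subst emeasure_density) (auto simp: sets_\<rho>X intro!: nn_integral_cong simp: indicator_def ennreal_mult)
    finally show "emeasure \<mu> A = emeasure \<nu> A" .
  qed
  have "(\<integral>z. indicator {z. snd z = 1} z * w (fst z) \<partial>\<rho>) = integral\<^sup>L \<mu> w"
    unfolding \<mu>_def
    apply (subst integral_distr)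
      apply (simp_all add: meas_\<rho>)
    apply (subst integral_density)
       apply (auto simp: meas_\<rho>)
    done
  also have "\<dots> = integral\<^sup>L \<nu> w" by (simp add: \<open>\<mu> = \<nu>\<close>)
  also have "\<dots> = (\<integral>x. (indicator unit_cube x * \<eta> x) * w x \<partial>\<rho>X)"
    unfolding \<nu>_def by (subst integral_density) (auto simp: meas_\<rho>X g_nn)
  finally show ?thesis .
qed

definition ys :: "(real^'d) \<times> real \<Rightarrow> real" where "ys z = 2 * indicator {z. snd z = 1} z - (1::real)"

lemma ys_bound: "\<bar>ys z\<bar> \<le> 1" by (simp add: ys_def indicator_def)
lemma ys_sq: "(ys z)\<^sup>2 = 1" by (simp add: ys_def indicator_def)
lemma ys_meas[measurable]: "ys \<in> borel_measurable borel"
proof -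
  have "{z::(real^'d)\<times>real. snd z = 1} = UNIV \<times> {1}" by auto
  then have "{z::(real^'d)\<times>real. snd z = 1} \<in> sets borel" by simp
  then have [measurable]: "(\<lambda>z. indicator {z::(real^'d)\<times>real. snd z = 1} z :: real) \<in> borel_measurable borel"
    by (rule borel_measurable_indicator)
  moreover have "(\<lambda>u::real. 2*u - 1) \<in> borel_measurable borel"
    by (intro borel_measurable_continuous_onI continuous_intros)
  ultimately have "(\<lambda>z. (\<lambda>u::real. 2*u - 1) (indicator {z::(real^'d)\<times>real. snd z = 1} z)) \<in> borel_measurable borel"
    by (rule measurable_compose)
  then show ?thesis unfolding ys_def[abs_def] by simp
qed
lemma ys_supp: "snd z \<in> {-1, 1} \<Longrightarrow> ys z = snd z" by (auto simp: ys_def indicator_def)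

lemma eta_abs: "x \<in> unit_cube \<Longrightarrow> \<bar>2 * \<eta> x - 1\<bar> \<le> 1"
  using \<eta>_range by auto

lemma integral_yv:
  fixes v :: "real^'d \<Rightarrow> real"
  assumes vm[measurable]: "v \<in> borel_measurable borel" and vb: "\<And>x. \<bar>v x\<bar> \<le> B"
  shows "(\<integral>z. ys z * v (fst z) \<partial>\<rho>) = (\<integral>x. (2 * \<eta> x - 1) * v x \<partial>\<rho>X)"
proof -
  have B0: "0 \<le> B" using vb[of undefined] abs_ge_zero order_trans by blast
  have i1: "integrable \<rho> (\<lambda>z. indicator {z. snd z = 1} z * v (fst z))"
    by (rule int_\<rho>[where B=B]) (auto intro!: abs_mult_le1 vb simp: indicator_def B0)
  have i2: "integrable \<rho> (\<lambda>z. v (fst z))" by (rule int_\<rho>[where B=B]) (auto intro!: vb)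
  have i3: "integrable \<rho>X (\<lambda>x. (indicator unit_cube x * \<eta> x) * v x)"
    by (rule int_\<rho>X[where B=B]) (use \<eta>_range in \<open>auto intro!: abs_mult_le1 vb simp: indicator_def B0\<close>)
  have i4: "integrable \<rho>X v" by (rule int_\<rho>X[where B=B]) (auto intro!: vb)
  have "(\<integral>z. ys z * v (fst z) \<partial>\<rho>) = (\<integral>z. 2 * (indicator {z. snd z = 1} z * v (fst z)) - v (fst z) \<partial>\<rho>)"
    by (intro Bochner_Integration.integral_cong refl) (simp add: ys_def algebra_simps)
  also have "\<dots> = 2 * (\<integral>z. indicator {z. snd z = 1} z * v (fst z) \<partial>\<rho>) - (\<integral>z. v (fst z) \<partial>\<rho>)"
    using i1 i2 by simp
  also have "\<dots> = 2 * (\<integral>x. (indicator unit_cube x * \<eta> x) * v x \<partial>\<rho>X) - (\<integral>x. v x \<partial>\<rho>X)"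
    by (simp add: integral_y1 integral_fst)
  also have "\<dots> = (\<integral>x. 2 * ((indicator unit_cube x * \<eta> x) * v x) - v x \<partial>\<rho>X)"
    using i3 i4 by simp
  also have "\<dots> = (\<integral>x. (2 * \<eta> x - 1) * v x \<partial>\<rho>X)"
    by (intro integral_cong_AE) (use AE_X in \<open>auto simp: algebra_simps\<close>)
  finally show ?thesis .
qed

lemma f\<rho>_big: assumes "x \<in> unit_cube" "f\<rho> x > 1" shows "\<eta> x = 1"
proof (rule ccontr)
  assume ne: "\<eta> x \<noteq> 1"
  have r: "0 \<le> \<eta> x" "\<eta> x \<le> 1" using \<eta>_range assms(1) by auto
  have le: "\<eta> x * hinge (f\<rho> x) + (1 - \<eta> x) * hinge (- f\<rho> x) \<le> \<eta> x * hinge 1 + (1 - \<eta> x) * hinge (- 1)"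
    using f\<rho>_min assms(1) by blast
  have "hinge (f\<rho> x) = 0" "hinge (- f\<rho> x) = 1 + f\<rho> x" "hinge 1 = 0" "hinge (-1) = 2"
    using assms(2) by (auto simp: hinge_def)
  with le have "(1 - \<eta> x) * (1 + f\<rho> x) \<le> (1 - \<eta> x) * 2" by simp
  moreover have "1 - \<eta> x > 0" using r ne by simp
  ultimately have "1 + f\<rho> x \<le> 2" by (meson mult_le_cancel_left_pos)
  with assms(2) show False by simp
qed

lemma f\<rho>_small: assumes "x \<in> unit_cube" "f\<rho> x < -1" shows "\<eta> x = 0"
proof (rule ccontr)
  assume ne: "\<eta> x \<noteq> 0"
  have r: "0 \<le> \<eta> x" "\<eta> x \<le> 1" using \<eta>_range assms(1) by auto
  have le: "\<eta> x * hinge (f\<rho> x) + (1 - \<eta> x) * hinge (- f\<rho> x) \<le> \<eta> x * hinge (-1) + (1 - \<eta> x) * hinge (- (-1))"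
    using f\<rho>_min assms(1) by blast
  have "hinge (f\<rho> x) = 1 - f\<rho> x" "hinge (- f\<rho> x) = 0" "hinge 1 = 0" "hinge (-1) = 2"
    using assms(2) by (auto simp: hinge_def)
  with le have "\<eta> x * (1 - f\<rho> x) \<le> \<eta> x * 2" by simp
  moreover have "\<eta> x > 0" using r ne by simp
  ultimately have "1 - f\<rho> x \<le> 2" by (meson mult_le_cancel_left_pos)
  with assms(2) show False by simp
qed

lemma fs_pos: assumes "x \<in> unit_cube" "\<eta> x > 1/2" shows "fs x = 1"
proof -
  have r: "0 \<le> \<eta> x" "\<eta> x \<le> 1" using \<eta>_range assms(1) by auto
  have le: "\<eta> x * hinge (f\<rho> x) + (1 - \<eta> x) * hinge (- f\<rho> x) \<le> \<eta> x * hinge 1 + (1 - \<eta> x) * hinge (- 1)"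
    using f\<rho>_min assms(1) by blast
  have h1: "hinge 1 = 0" "hinge (-1) = 2" by (auto simp: hinge_def)
  have "f\<rho> x \<ge> 1"
  proof (rule ccontr)
    assume "\<not> f\<rho> x \<ge> 1"
    then have f1: "f\<rho> x < 1" by simp
    show False
    proof (cases "f\<rho> x < -1")
      case True
      have "hinge (f\<rho> x) = 1 - f\<rho> x" "hinge (- f\<rho> x) = 0" using True by (auto simp: hinge_def)
      with le h1 have "\<eta> x * (1 - f\<rho> x) \<le> (1 - \<eta> x) * 2" by simp
      moreover have "\<eta> x * (1 - f\<rho> x) \<ge> \<eta> x * 2" using True r by (intro mult_left_mono) auto
      ultimately show False using assms(2) by simp
    next
      case False
      have "hinge (f\<rho> x) = 1 - f\<rho> x" "hinge (- f\<rho> x) = 1 + f\<rho> x" using False f1 by (auto simp: hinge_def)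
      with le h1 have "\<eta> x * (1 - f\<rho> x) + (1 - \<eta> x) * (1 + f\<rho> x) \<le> (1 - \<eta> x) * 2" by simp
      moreover have "(2 * \<eta> x - 1) * (1 - f\<rho> x) > 0" using assms(2) f1 by (intro mult_pos_pos) auto
      ultimately show False by (simp add: algebra_simps)
    qed
  qed
  then show ?thesis by (simp add: fs_def proj1_def)
qed

lemma fs_neg: assumes "x \<in> unit_cube" "\<eta> x < 1/2" shows "fs x = -1"
proof -
  have r: "0 \<le> \<eta> x" "\<eta> x \<le> 1" using \<eta>_range assms(1) by auto
  have le: "\<eta> x * hinge (f\<rho> x) + (1 - \<eta> x) * hinge (- f\<rho> x) \<le> \<eta> x * hinge (-1) + (1 - \<eta> x) * hinge (- (-1))"
    using f\<rho>_min assms(1) by blast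
  have h1: "hinge 1 = 0" "hinge (-1) = 2" by (auto simp: hinge_def)
  have "f\<rho> x \<le> -1"
  proof (rule ccontr)
    assume "\<not> f\<rho> x \<le> -1"
    then have f1: "f\<rho> x > -1" by simp
    show False
    proof (cases "f\<rho> x > 1")
      case True
      have "hinge (f\<rho> x) = 0" "hinge (- f\<rho> x) = 1 + f\<rho> x" using True by (auto simp: hinge_def)
      with le h1 have "(1 - \<eta> x) * (1 + f\<rho> x) \<le> \<eta> x * 2" by simp
      moreover have "(1 - \<eta> x) * (1 + f\<rho> x) \<ge> (1 - \<eta> x) * 2" using True r by (intro mult_left_mono) auto
      ultimately show False using assms(2) by simp
    next
      case False
      have "hinge (f\<rho> x) = 1 - f\<rho> x" "hinge (- f\<rho> x) = 1 + f\<rho> x" using False f1 by (auto simp: hinge_def)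
      with le h1 have "\<eta> x * (1 - f\<rho> x) + (1 - \<eta> x) * (1 + f\<rho> x) \<le> \<eta> x * 2" by simp
      moreover have "(1 - 2 * \<eta> x) * (1 + f\<rho> x) > 0" using assms(2) f1 by (intro mult_pos_pos) auto
      ultimately show False by (simp add: algebra_simps)
    qed
  qed
  then show ?thesis by (simp add: fs_def proj1_def)
qed

lemma sign_id:
  assumes "x \<in> unit_cube" "\<bar>g\<bar> \<le> 1"
  shows "(2 * \<eta> x - 1) * (fs x - g) = \<bar>2 * \<eta> x - 1\<bar> * \<bar>fs x - g\<bar>"
proof -
  consider "\<eta> x > 1/2" | "\<eta> x < 1/2" | "\<eta> x = 1/2" by linarith
  then show ?thesis
  proof cases
    case 1 then show ?thesis using fs_pos[OF assms(1) 1] assms(2) by (simp add: abs_mult)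
  next
    case 2
    have "\<bar>2 * \<eta> x - 1\<bar> = 1 - 2 * \<eta> x" "\<bar>fs x - g\<bar> = 1 + g"
      using 2 fs_neg[OF assms(1) 2] assms(2) by auto
    then show ?thesis using fs_neg[OF assms(1) 2] by (simp add: algebra_simps)
  qed simp
qed

lemma fs_meas[measurable]: "fs \<in> borel_measurable borel"
  unfolding fs_def proj1_def by measurable

lemma fs_bound: "\<bar>fs x\<bar> \<le> 1" by (simp add: fs_def proj1_bound)

end



lemma hinge_meas[measurable]: "hinge \<in> borel_measurable borel"
  unfolding hinge_def[abs_def] by measurable

context hs begin

interpretation P: prob_space \<rho> by (fact prob)
interpretation PX: prob_space \<rho>X by (fact prob_\<rho>X)

definition "\<Delta> h = (\<integral>x. (2 * \<eta> x - 1) * (fs x - h x) \<partial>\<rho>X)"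

definition G :: "((real^'d) \<times> real) set" where
  "G = unit_cube \<times> {-1,1} - ({x\<in>unit_cube. \<eta> x = 0} \<times> {1} \<union> {x\<in>unit_cube. \<eta> x = 1} \<times> {-1})"

lemma G_borel[measurable]: "G \<in> sets borel"
  unfolding G_def by measurable

lemma AE_G: "AE z in \<rho>. z \<in> G"
proof -
  define A0 where "A0 = {x\<in>unit_cube. \<eta> x = 0}"
  define A1 where "A1 = {x\<in>unit_cube. \<eta> x = 1}"
  have A0m[measurable]: "A0 \<in> sets borel" unfolding A0_def by measurable
  have A1m[measurable]: "A1 \<in> sets borel" unfolding A1_def by measurable
  have m0: "measure \<rho> (A0 \<times> {1}) = 0"
  proof -
    have "measure \<rho> (A0 \<times> {1}) = (\<integral>x. indicator A0 x * \<eta> x \<partial>\<rho>X)"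
      using \<eta>_cond A0m by (simp add: \<rho>X_def)
    also have "\<dots> = (\<integral>x. 0 \<partial>\<rho>X)"
      by (intro Bochner_Integration.integral_cong refl) (auto simp: A0_def indicator_def)
    finally show ?thesis by simp
  qed
  have m1: "measure \<rho> (A1 \<times> {-1}) = 0"
  proof -
    have "measure \<rho> (A1 \<times> {1}) = (\<integral>x. indicator A1 x * \<eta> x \<partial>\<rho>X)"
      using \<eta>_cond A1m by (simp add: \<rho>X_def)
    also have "\<dots> = (\<integral>x. indicator A1 x \<partial>\<rho>X)"
      by (intro Bochner_Integration.integral_cong refl) (auto simp: A1_def indicator_def)
    also have "\<dots> = measure \<rho>X A1" by (simp add: sets_\<rho>X)
    also have "\<dots> = measure \<rho> (fst -` A1 \<inter> space \<rho>)"
      unfolding \<rho>X_def by (rule measure_distr) auto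
    finally have e1: "measure \<rho> (A1 \<times> {1}) = measure \<rho> (fst -` A1 \<inter> space \<rho>)" .
    have "measure \<rho> (A1 \<times> {-1}) + measure \<rho> (A1 \<times> {1}) = measure \<rho> (A1 \<times> {-1} \<union> A1 \<times> {1})"
      by (rule P.finite_measure_Union[symmetric]) (auto simp: sets_\<rho>)
    also have "\<dots> \<le> measure \<rho> (fst -` A1 \<inter> space \<rho>)"
      by (intro P.finite_measure_mono) (auto simp: sets_\<rho> space_\<rho>)
    finally show ?thesis using e1 measure_nonneg[of \<rho> "A1 \<times> {-1}"] by linarith
  qed
  have n0: "A0 \<times> {1} \<in> null_sets \<rho>"
    using m0 by (simp add: null_sets_def P.emeasure_eq_measure sets_\<rho>)
  have n1: "A1 \<times> {-1} \<in> null_sets \<rho>"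
    using m1 by (simp add: null_sets_def P.emeasure_eq_measure sets_\<rho>)
  show ?thesis
    using AE_support AE_not_in[OF n0] AE_not_in[OF n1]
    by eventually_elim (auto simp: G_def A0_def A1_def)
qed

lemma G_snd: "z \<in> G \<Longrightarrow> snd z \<in> {-1, 1}" by (auto simp: G_def)

lemma hinge_h_G:
  assumes "z \<in> G" "\<bar>u\<bar> \<le> 1"
  shows "hinge (snd z * u) = 1 - ys z * u"
  using G_snd[OF assms(1)] assms(2) ys_supp[OF G_snd[OF assms(1)]]
  by (auto simp: hinge_def)

lemma hinge_f\<rho>_G:
  assumes "z \<in> G"
  shows "hinge (snd z * f\<rho> (fst z)) = 1 - ys z * fs (fst z)"
proof -
  obtain x y where z: "z = (x, y)" by (cases z)
  have x: "x \<in> unit_cube" and y: "y \<in> {-1, 1}" using assms by (auto simp: G_def z)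
  have ysz: "ys z = y" using ys_supp[OF G_snd[OF assms]] z by simp
  show ?thesis
  proof (cases "y = 1")
    case True
    then have "\<eta> x \<noteq> 0" using assms by (auto simp: G_def z)
    then have "f\<rho> x \<ge> -1" using f\<rho>_small[OF x] by force
    then show ?thesis using True ysz by (auto simp: z hinge_def fs_def proj1_def)
  next
    case False
    then have y': "y = -1" using y by auto
    then have "\<eta> x \<noteq> 1" using assms by (auto simp: G_def z)
    then have "f\<rho> x \<le> 1" using f\<rho>_big[OF x] by force
    then show ?thesis using y' ysz by (auto simp: z hinge_def fs_def proj1_def)
  qed
qed

lemma gen_hinge:
  assumes hm[measurable]: "h \<in> borel_measurable borel" and hb: "\<And>x. \<bar>h x\<bar> \<le> 1"
  shows "gen_error \<rho> hinge h = 1 - (\<integral>z. ys z * h (fst z) \<partial>\<rho>)"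
proof -
  have "gen_error \<rho> hinge h = (\<integral>z. 1 - ys z * h (fst z) \<partial>\<rho>)"
    unfolding gen_error_def
  proof (intro integral_cong_AE)
    show "AE z in \<rho>. hinge (snd z * h (fst z)) = 1 - ys z * h (fst z)"
      using AE_G by eventually_elim (simp add: hinge_h_G hb)
  qed (auto simp: meas_\<rho>)
  also have "\<dots> = 1 - (\<integral>z. ys z * h (fst z) \<partial>\<rho>)"
  proof -
    have "integrable \<rho> (\<lambda>z. ys z * h (fst z))"
      by (rule int_\<rho>[where B=1]) (auto intro!: abs_mult_le1 ys_bound hb)
    then show ?thesis by (simp add: P.prob_space)
  qed
  finally show ?thesis .
qed

lemma gen_f\<rho>:
  shows "gen_error \<rho> hinge f\<rho> = 1 - (\<integral>z. ys z * fs (fst z) \<partial>\<rho>)"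
proof -
  have "gen_error \<rho> hinge f\<rho> = (\<integral>z. 1 - ys z * fs (fst z) \<partial>\<rho>)"
    unfolding gen_error_def
  proof (intro integral_cong_AE)
    show "AE z in \<rho>. hinge (snd z * f\<rho> (fst z)) = 1 - ys z * fs (fst z)"
      using AE_G by eventually_elim (simp add: hinge_f\<rho>_G)
  qed (auto simp: meas_\<rho>)
  also have "\<dots> = 1 - (\<integral>z. ys z * fs (fst z) \<partial>\<rho>)"
  proof -
    have "integrable \<rho> (\<lambda>z. ys z * fs (fst z))"
      by (rule int_\<rho>[where B=1]) (auto intro!: abs_mult_le1 ys_bound fs_bound)
    then show ?thesis by (simp add: P.prob_space)
  qed
  finally show ?thesis .
qed

lemma gen_diff:
  assumes hm[measurable]: "h \<in> borel_measurable borel" and hb: "\<And>x. \<bar>h x\<bar> \<le> 1"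
  shows "gen_error \<rho> hinge h - gen_error \<rho> hinge f\<rho> = \<Delta> h"
proof -
  have b: "\<bar>fs x - h x\<bar> \<le> 2" for x using fs_bound[of x] hb[of x] by linarith
  have i1: "integrable \<rho> (\<lambda>z. ys z * h (fst z))"
    by (rule int_\<rho>[where B=1]) (auto intro!: abs_mult_le1 ys_bound hb)
  have i2: "integrable \<rho> (\<lambda>z. ys z * fs (fst z))"
    by (rule int_\<rho>[where B=1]) (auto intro!: abs_mult_le1 ys_bound fs_bound)
  have "gen_error \<rho> hinge h - gen_error \<rho> hinge f\<rho> = (\<integral>z. ys z * fs (fst z) \<partial>\<rho>) - (\<integral>z. ys z * h (fst z) \<partial>\<rho>)"
    by (simp add: gen_hinge[OF hm hb] gen_f\<rho>)
  also have "\<dots> = (\<integral>z. ys z * (fs (fst z) - h (fst z)) \<partial>\<rho>)"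
    using i1 i2 by (simp add: algebra_simps)
  also have "\<dots> = \<Delta> h"
    unfolding \<Delta>_def by (rule integral_yv[where B=2]) (auto intro!: b)
  finally show ?thesis .
qed

lemma emp_diff:
  assumes hb: "\<And>x. \<bar>h x\<bar> \<le> 1" and DG: "\<And>i. i < m \<Longrightarrow> D i \<in> G"
  shows "emp_error m D hinge h - emp_error m D hinge f\<rho> = (\<Sum>i<m. ys (D i) * (fs (fst (D i)) - h (fst (D i)))) / real m"
proof -
  have "emp_error m D hinge h - emp_error m D hinge f\<rho> = (\<Sum>i<m. hinge (snd (D i) * h (fst (D i))) - hinge (snd (D i) * f\<rho> (fst (D i)))) / real m"
    by (simp add: emp_error_def sum_subtractf diff_divide_distrib)
  also have "\<dots> = (\<Sum>i<m. ys (D i) * (fs (fst (D i)) - h (fst (D i)))) / real m"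
    by (intro arg_cong[where f="\<lambda>u. u / real m"] sum.cong refl)
       (simp add: hinge_h_G[OF DG hb] hinge_f\<rho>_G[OF DG] algebra_simps)
  finally show ?thesis .
qed

lemma \<Delta>_nonneg:
  assumes hm[measurable]: "h \<in> borel_measurable borel" and hb: "\<And>x. \<bar>h x\<bar> \<le> 1"
  shows "0 \<le> \<Delta> h"
  unfolding \<Delta>_def
proof (intro integral_nonneg_AE)
  show "AE x in \<rho>X. 0 \<le> (2 * \<eta> x - 1) * (fs x - h x)"
    using AE_X by eventually_elim (simp add: sign_id hb)
qed

lemma \<Delta>_le2:
  assumes hm[measurable]: "h \<in> borel_measurable borel" and hb: "\<And>x. \<bar>h x\<bar> \<le> 1"
  shows "\<Delta> h \<le> 2"
proof -
  have b: "\<bar>fs x - h x\<bar> \<le> 2" for x using fs_bound[of x] hb[of x] by linarith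
  have "\<Delta> h \<le> (\<integral>x. 2 \<partial>\<rho>X)"
    unfolding \<Delta>_def
  proof (intro integral_mono_AE)
    show "integrable \<rho>X (\<lambda>x. (2 * \<eta> x - 1) * (fs x - h x))"
      by (rule int_\<rho>X_AE[where B=2]) (auto intro!: abs_mult_le1 eta_abs b)
    show "AE x in \<rho>X. (2 * \<eta> x - 1) * (fs x - h x) \<le> 2"
      using AE_X
    proof eventually_elim
      case (elim x)
      have "(2 * \<eta> x - 1) * (fs x - h x) \<le> \<bar>(2 * \<eta> x - 1) * (fs x - h x)\<bar>" by simp
      also have "\<dots> \<le> 2" by (intro abs_mult_le1 eta_abs elim b)
      finally show ?case .
    qed
  qed simp
  then show ?thesis by (simp add: PX.prob_space)
qed

end



lemma eps_rate:
  fixes q a c D \<gamma> :: real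
  assumes q: "0 < q" and a: "0 < a" and c: "0 < c" and D: "0 \<le> D" and g: "0 < \<gamma>"
  shows "2 * sqrt ((4 * (a powr (1/(q+2))) powr q + 2 * D / (c * a powr (1/(q+2)))) * a)
           \<le> \<gamma> * D + (4 + 2/(c*\<gamma>)) * a powr ((q+1)/(q+2))"
proof -
  define t where "t = a powr (1/(q+2))"
  define p where "p = (q+1)/(q+2)"
  have tp: "0 < t" using a by (simp add: t_def)
  have q2: "q + 2 \<noteq> 0" using q by simp
  have ap: "0 < a powr p" using a by simp
  have e1: "t powr q * a = (a powr p)^2"
  proof -
    have "t powr q * a = a powr (q/(q+2)) * a powr 1"
      using a q by (simp add: t_def powr_powr)
    also have "\<dots> = a powr (q/(q+2) + 1)" by (simp add: powr_add)
    also have "q/(q+2) + 1 = p + p"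
    proof -
      have "q/(q+2) + 1 = (q + (q+2))/(q+2)" using q2 by (simp add: field_simps)
      also have "\<dots> = ((q+1) + (q+1))/(q+2)" by (rule arg_cong[where f="\<lambda>u. u/(q+2)"]) simp
      also have "\<dots> = p + p" by (simp only: p_def add_divide_distrib)
      finally show ?thesis .
    qed
    also have "a powr (p + p) = (a powr p)^2" by (simp only: powr_add power2_eq_square)
    finally show ?thesis .
  qed
  have e2: "a / t = a powr p"
  proof -
    have "a / t = a powr 1 / a powr (1/(q+2))" using a by (simp add: t_def)
    also have "\<dots> = a powr (1 - 1/(q+2))" by (simp add: powr_diff)
    also have "1 - 1/(q+2) = p" using q2 by (simp add: p_def field_simps)
    finally show ?thesis .
  qed
  have s1: "sqrt (4 * (t powr q * a)) = 2 * a powr p"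
    using ap by (simp add: e1 real_sqrt_mult)
  have s2: "sqrt (D * (2 * (a / t) / c)) \<le> ((\<gamma> * D) + (2 * a powr p / (c * \<gamma>))) / 2"
  proof -
    have "sqrt (D * (2 * (a / t) / c)) = sqrt ((\<gamma> * D) * (2 * a powr p / (c * \<gamma>)))"
      using g by (simp add: e2 field_simps)
    also have "\<dots> \<le> ((\<gamma> * D) + (2 * a powr p / (c * \<gamma>))) / 2"
      using g D c ap by (intro arith_geo_mean_sqrt) auto
    finally show ?thesis .
  qed
  have "sqrt ((4 * t powr q + 2 * D / (c * t)) * a) = sqrt (4 * (t powr q * a) + D * (2 * (a / t) / c))"
    by (simp add: algebra_simps)
  also have "\<dots> \<le> sqrt (4 * (t powr q * a)) + sqrt (D * (2 * (a / t) / c))"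
    using tp a c D by (intro sqrt_add_le_add_sqrt) auto
  finally have "sqrt ((4 * t powr q + 2 * D / (c * t)) * a) \<le> 2 * a powr p + (\<gamma> * D + 2 * a powr p / (c * \<gamma>)) / 2"
    using s1 s2 by linarith
  moreover have "(4 + 2/(c*\<gamma>)) * a powr p = 4 * a powr p + 2 * (a powr p / (c*\<gamma>))"
    by (simp add: algebra_simps)
  ultimately have "2 * sqrt ((4 * t powr q + 2 * D / (c * t)) * a) \<le> \<gamma> * D + (4 + 2/(c*\<gamma>)) * a powr p"
    by (simp add: field_simps)
  then show ?thesis unfolding t_def p_def .
qed

context hs begin

interpretation P: prob_space \<rho> by (fact prob)
interpretation PX: prob_space \<rho>X by (fact prob_\<rho>X)

lemma tsyb_int:
  assumes hm[measurable]: "h \<in> borel_measurable borel" and hb: "\<And>x. \<bar>h x\<bar> \<le> 1"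
    and cp: "0 < c" and tp: "0 < t"
    and mA: "measure \<rho>X {x\<in>unit_cube. \<bar>2 * \<eta> x - 1\<bar> \<le> c * t} \<le> t powr q"
  shows "(\<integral>x. \<bar>fs x - h x\<bar> \<partial>\<rho>X) \<le> 2 * t powr q + \<Delta> h / (c * t)"
proof -
  define A where "A = {x\<in>unit_cube. \<bar>2 * \<eta> x - 1\<bar> \<le> c * t}"
  have Am[measurable]: "A \<in> sets borel" unfolding A_def by measurable
  have b: "\<bar>fs x - h x\<bar> \<le> 2" for x using fs_bound[of x] hb[of x] by linarith
  have ct: "0 < c * t" using cp tp by simp
  have i1: "integrable \<rho>X (\<lambda>x. \<bar>fs x - h x\<bar>)" by (rule int_\<rho>X[where B=2]) (auto intro!: b)
  have i2: "integrable \<rho>X (\<lambda>x. 2 * (indicator A x :: real))" by (rule int_\<rho>X[where B=2]) (auto simp: indicator_def)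
  have i3: "integrable \<rho>X (\<lambda>x. (2 * \<eta> x - 1) * (fs x - h x))"
    by (rule int_\<rho>X_AE[where B=2]) (auto intro!: abs_mult_le1 eta_abs b)
  have i3': "integrable \<rho>X (\<lambda>x. (2 * \<eta> x - 1) * (fs x - h x) / (c * t))"
    using i3 by simp
  have "(\<integral>x. \<bar>fs x - h x\<bar> \<partial>\<rho>X) \<le> (\<integral>x. 2 * (indicator A x :: real) + (2 * \<eta> x - 1) * (fs x - h x) / (c * t) \<partial>\<rho>X)"
  proof (rule integral_mono_AE)
    show "integrable \<rho>X (\<lambda>x. \<bar>fs x - h x\<bar>)" by (fact i1)
    show "integrable \<rho>X (\<lambda>x. 2 * (indicator A x :: real) + (2 * \<eta> x - 1) * (fs x - h x) / (c * t))"
      using i2 i3' by simp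
    show "AE x in \<rho>X. \<bar>fs x - h x\<bar> \<le> 2 * (indicator A x :: real) + (2 * \<eta> x - 1) * (fs x - h x) / (c * t)"
      using AE_X
    proof eventually_elim
      case (elim x)
      have sid: "(2 * \<eta> x - 1) * (fs x - h x) = \<bar>2 * \<eta> x - 1\<bar> * \<bar>fs x - h x\<bar>"
        by (rule sign_id[OF elim hb])
      show ?case
      proof (cases "x \<in> A")
        case True
        have "0 \<le> (2 * \<eta> x - 1) * (fs x - h x) / (c * t)" using sid ct by simp
        then show ?thesis using True b[of x] by simp
      next
        case False
        then have lt: "c * t < \<bar>2 * \<eta> x - 1\<bar>" using elim by (auto simp: A_def)
        have "c * t * \<bar>fs x - h x\<bar> \<le> \<bar>2 * \<eta> x - 1\<bar> * \<bar>fs x - h x\<bar>"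
          using lt by (intro mult_right_mono) auto
        then have "\<bar>fs x - h x\<bar> \<le> (2 * \<eta> x - 1) * (fs x - h x) / (c * t)"
          using ct sid by (simp add: le_divide_eq mult.commute)
        then show ?thesis using False by simp
      qed
    qed
  qed
  also have "\<dots> = 2 * measure \<rho>X A + \<Delta> h / (c * t)"
    using i2 i3' by (simp add: \<Delta>_def sets_\<rho>X)
  also have "\<dots> \<le> 2 * t powr q + \<Delta> h / (c * t)"
    using mA by (simp add: A_def)
  finally show ?thesis .
qed

lemma second_moment:
  assumes hm[measurable]: "h \<in> borel_measurable borel" and hb: "\<And>x. \<bar>h x\<bar> \<le> 1"
  shows "(\<integral>z. (ys z * (fs (fst z) - h (fst z)))\<^sup>2 \<partial>\<rho>) \<le> 2 * (\<integral>x. \<bar>fs x - h x\<bar> \<partial>\<rho>X)"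
proof -
  have b: "\<bar>fs x - h x\<bar> \<le> 2" for x using fs_bound[of x] hb[of x] by linarith
  have "(\<integral>z. (ys z * (fs (fst z) - h (fst z)))\<^sup>2 \<partial>\<rho>) = (\<integral>z. (fs (fst z) - h (fst z))\<^sup>2 \<partial>\<rho>)"
    by (simp add: power_mult_distrib ys_sq)
  also have "\<dots> = (\<integral>x. (fs x - h x)\<^sup>2 \<partial>\<rho>X)" by (rule integral_fst) simp
  also have "\<dots> \<le> (\<integral>x. 2 * \<bar>fs x - h x\<bar> \<partial>\<rho>X)"
  proof (rule integral_mono)
    show "integrable \<rho>X (\<lambda>x. (fs x - h x)\<^sup>2)"
      by (rule int_\<rho>X[where B=4]) (auto simp: abs_square_le_1 intro!: order_trans[OF _ power_mono[OF b, of _ 2, simplified]])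
    show "integrable \<rho>X (\<lambda>x. 2 * \<bar>fs x - h x\<bar>)"
      by (rule int_\<rho>X[where B=4]) (auto intro!: order_trans[OF _ mult_left_mono[OF b, of 2, simplified]])
    fix x
    have "(fs x - h x)\<^sup>2 = \<bar>fs x - h x\<bar> * \<bar>fs x - h x\<bar>" by (simp add: power2_eq_square)
    also have "\<dots> \<le> 2 * \<bar>fs x - h x\<bar>" by (intro mult_right_mono b) simp
    finally show "(fs x - h x)\<^sup>2 \<le> 2 * \<bar>fs x - h x\<bar>" .
  qed
  also have "\<dots> = 2 * (\<integral>x. \<bar>fs x - h x\<bar> \<partial>\<rho>X)" by simp
  finally show ?thesis .
qed

end



context hs begin

interpretation P: prob_space \<rho> by (fact prob)
interpretation PX: prob_space \<rho>X by (fact prob_\<rho>X)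

lemma bern_app:
  assumes hm[measurable]: "h \<in> borel_measurable borel" and hb: "\<And>x. \<bar>h x\<bar> \<le> 1"
    and cp: "0 < c"
    and tsy: "\<forall>t>0. measure \<rho>X {x\<in>unit_cube. \<bar>2 * \<eta> x - 1\<bar> \<le> c * t} \<le> t powr q"
    and ap: "0 < a"
    and t_def: "t = a powr (1/(q+2))"
    and V_def: "V = 4 * t powr q + 2 * \<Delta> h / (c * t)"
  shows "measure (PiM {..<m} (\<lambda>_. \<rho>))
           {D \<in> space (PiM {..<m} (\<lambda>_. \<rho>)). real m * (2 * sqrt (V * a) + 8 * a)
               \<le> (\<Sum>i<m. \<Delta> h - ys (D i) * (fs (fst (D i)) - h (fst (D i))))}
         \<le> exp (- (real m * a))"
proof -
  define W where "W z = \<Delta> h - ys z * (fs (fst z) - h (fst z))" for z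
  define \<xi> where "\<xi> z = ys z * (fs (fst z) - h (fst z))" for z
  have Wm[measurable]: "W \<in> borel_measurable \<rho>" unfolding W_def by (simp add: meas_\<rho>)
  have \<xi>m[measurable]: "\<xi> \<in> borel_measurable borel" unfolding \<xi>_def by measurable
  have b: "\<bar>fs x - h x\<bar> \<le> 2" for x using fs_bound[of x] hb[of x] by linarith
  have \<xi>b: "\<bar>\<xi> z\<bar> \<le> 2" for z unfolding \<xi>_def by (intro abs_mult_le1 ys_bound b)
  have D0: "0 \<le> \<Delta> h" by (rule \<Delta>_nonneg[OF hm hb])
  have D2: "\<Delta> h \<le> 2" by (rule \<Delta>_le2[OF hm hb])
  have tp: "0 < t" using ap by (simp add: t_def)
  have Vp: "0 < V"
  proof -
    have "0 < t powr q" using tp by simp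
    moreover have "0 \<le> 2 * \<Delta> h / (c * t)" using tp cp D0 by simp
    ultimately show ?thesis unfolding V_def by linarith
  qed
  have i\<xi>: "integrable \<rho> \<xi>" by (rule int_\<rho>[where B=2]) (auto intro!: \<xi>b)
  have i\<xi>2: "integrable \<rho> (\<lambda>z. (\<xi> z)\<^sup>2)"
  proof (rule int_\<rho>[where B=4])
    fix z
    have "\<bar>\<xi> z\<bar>^2 \<le> 2^2" by (rule power_mono[OF \<xi>b]) simp
    then show "\<bar>(\<xi> z)\<^sup>2\<bar> \<le> 4" by simp
  qed simp
  have E\<xi>: "integral\<^sup>L \<rho> \<xi> = \<Delta> h"
    unfolding \<xi>_def \<Delta>_def by (rule integral_yv[where B=2]) (auto intro!: b)
  have EW: "integral\<^sup>L \<rho> W = 0"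
  proof -
    have "integral\<^sup>L \<rho> W = (\<integral>z. \<Delta> h - \<xi> z \<partial>\<rho>)" by (simp add: W_def[abs_def] \<xi>_def)
    also have "\<dots> = \<Delta> h - integral\<^sup>L \<rho> \<xi>" using i\<xi> by (simp add: P.prob_space)
    finally show ?thesis using E\<xi> by simp
  qed
  have EW2: "integral\<^sup>L \<rho> (\<lambda>z. (W z)\<^sup>2) \<le> V"
  proof -
    have "integral\<^sup>L \<rho> (\<lambda>z. (W z)\<^sup>2) = (\<integral>z. (\<Delta> h)\<^sup>2 - 2 * \<Delta> h * \<xi> z + (\<xi> z)\<^sup>2 \<partial>\<rho>)"
      by (intro Bochner_Integration.integral_cong refl) (simp add: W_def \<xi>_def power2_diff)
    also have "\<dots> = (\<Delta> h)\<^sup>2 - 2 * \<Delta> h * integral\<^sup>L \<rho> \<xi> + integral\<^sup>L \<rho> (\<lambda>z. (\<xi> z)\<^sup>2)"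
      using i\<xi> i\<xi>2 by (simp add: P.prob_space)
    also have "\<dots> \<le> integral\<^sup>L \<rho> (\<lambda>z. (\<xi> z)\<^sup>2)" using E\<xi> by (simp add: power2_eq_square)
    also have "\<dots> \<le> 2 * (\<integral>x. \<bar>fs x - h x\<bar> \<partial>\<rho>X)"
      unfolding \<xi>_def by (rule second_moment[OF hm hb])
    also have "\<dots> \<le> 2 * (2 * t powr q + \<Delta> h / (c * t))"
    proof -
      have "measure \<rho>X {x\<in>unit_cube. \<bar>2 * \<eta> x - 1\<bar> \<le> c * t} \<le> t powr q" using tsy tp by blast
      from tsyb_int[OF hm hb cp tp this] show ?thesis by simp
    qed
    also have "\<dots> = V" by (simp add: V_def)
    finally show ?thesis .
  qed
  define \<epsilon> where "\<epsilon> = 2 * sqrt (V * a) + 8 * a"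
  have sq0: "0 \<le> sqrt (V * a)" using Vp ap by simp
  have ep: "0 < \<epsilon>" using sq0 ap unfolding \<epsilon>_def by linarith
  have Bn: "measure (PiM {..<m} (\<lambda>_. \<rho>)) {D \<in> space (PiM {..<m} (\<lambda>_. \<rho>)). real m * \<epsilon> \<le> (\<Sum>i<m. W (D i))}
           \<le> exp (- (real m * min (\<epsilon>/(2*4)) (\<epsilon>\<^sup>2/(4*V))))"
  proof (rule bernstein_iid[where Bd=4])
    show "prob_space \<rho>" by (fact prob)
    show "W \<in> borel_measurable \<rho>" by (fact Wm)
    fix z
    show "W z \<le> 4" using \<xi>b[of z] D2 by (simp add: W_def \<xi>_def[symmetric])
    show "\<bar>W z\<bar> \<le> 4" using \<xi>b[of z] D2 D0 by (simp add: W_def \<xi>_def[symmetric])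
  next
    show "integral\<^sup>L \<rho> W = 0" by (fact EW)
    show "integral\<^sup>L \<rho> (\<lambda>z. (W z)\<^sup>2) \<le> V" by (fact EW2)
  qed (use Vp ep in auto)
  have mina: "a \<le> min (\<epsilon>/(2*4)) (\<epsilon>\<^sup>2/(4*V))"
  proof -
    have "a \<le> \<epsilon>/(2*4)" using sq0 by (simp add: \<epsilon>_def)
    moreover have "a \<le> \<epsilon>\<^sup>2/(4*V)"
    proof -
      have "2 * sqrt (V * a) \<le> \<epsilon>" using ap by (simp add: \<epsilon>_def)
      then have "(2 * sqrt (V * a))^2 \<le> \<epsilon>^2" using sq0 by (intro power_mono) auto
      then have "4 * (V * a) \<le> \<epsilon>^2" using Vp ap by (simp add: power_mult_distrib)
      then show ?thesis using Vp by (simp add: le_divide_eq mult.commute mult.left_commute)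
    qed
    ultimately show ?thesis by simp
  qed
  have e2: "exp (- (real m * min (\<epsilon>/(2*4)) (\<epsilon>\<^sup>2/(4*V)))) \<le> exp (- (real m * a))"
    using mina by (simp add: mult_left_mono)
  from order_trans[OF Bn e2] show ?thesis by (simp add: W_def \<epsilon>_def)
qed

end



lemma zero_in_rkhs_vals: "0 \<in> rkhs_vals X K f"
  unfolding rkhs_vals_def by (rule CollectI, rule exI[of _ 0]) auto

lemma rkhs_vals_zero: "rkhs_vals X K (\<lambda>_. 0) = {0}"
  using zero_in_rkhs_vals[of X K "\<lambda>_. 0"] by (auto simp: rkhs_vals_def)

lemma in_rkhs_zero: "in_rkhs X K (\<lambda>_. 0)"
  by (simp add: in_rkhs_def rkhs_vals_zero)

lemma rkhs_norm_zero: "rkhs_norm X K (\<lambda>_. 0) = 0"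
  by (simp add: rkhs_norm_def rkhs_vals_zero)

lemma rkhs_norm_nonneg: "in_rkhs X K f \<Longrightarrow> 0 \<le> rkhs_norm X K f"
  unfolding rkhs_norm_def in_rkhs_def using zero_in_rkhs_vals by (auto intro: cSup_upper)

lemma rkhs_scale:
  assumes f: "in_rkhs X K f" and a: "0 \<le> a" and n: "a * rkhs_norm X K f \<le> 1"
  shows "(\<lambda>x. a * f x) \<in> rkhs_ball X K 1"
proof -
  have bdd: "bdd_above (rkhs_vals X K f)" using f by (simp add: in_rkhs_def)
  have le: "v \<le> 1" if "v \<in> rkhs_vals X K (\<lambda>x. a * f x)" for v
  proof -
    have "\<exists>(n::nat) c xs. v = \<bar>\<Sum>i<n. c i * (a * f (xs i))\<bar> \<and> (\<forall>i<n. xs i \<in> X) \<and> (\<Sum>i<n. \<Sum>j<n. c i * c j * K (xs i) (xs j)) \<le> 1"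
      using that by (simp add: rkhs_vals_def)
    then obtain n :: nat and c xs where v: "v = \<bar>\<Sum>i<n. c i * (a * f (xs i))\<bar>"
      and xs: "\<forall>i<n. xs i \<in> X" and q: "(\<Sum>i<n. \<Sum>j<n. c i * c j * K (xs i) (xs j)) \<le> 1"
      by blast
    have "\<bar>\<Sum>i<n. c i * f (xs i)\<bar> \<in> rkhs_vals X K f"
      unfolding rkhs_vals_def using xs q by blast
    then have "\<bar>\<Sum>i<n. c i * f (xs i)\<bar> \<le> rkhs_norm X K f"
      unfolding rkhs_norm_def using bdd by (rule cSup_upper)
    moreover have "v = a * \<bar>\<Sum>i<n. c i * f (xs i)\<bar>"
    proof -
      have "(\<Sum>i<n. c i * (a * f (xs i))) = a * (\<Sum>i<n. c i * f (xs i))"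
        by (simp add: sum_distrib_left algebra_simps)
      then show ?thesis using a by (simp add: v abs_mult)
    qed
    ultimately have "v \<le> a * rkhs_norm X K f" using a by (simp add: mult_left_mono)
    then show ?thesis using n by simp
  qed
  have in_r: "in_rkhs X K (\<lambda>x. a * f x)"
    using f le unfolding in_rkhs_def by (auto simp: bdd_above_def)
  have "rkhs_norm X K (\<lambda>x. a * f x) \<le> 1"
    unfolding rkhs_norm_def
    by (rule cSup_least) (use zero_in_rkhs_vals[of X K "\<lambda>x. a * f x"] le in auto)
  then show ?thesis using in_r by (simp add: rkhs_ball_def)
qed

lemma cover_obtain:
  assumes "covering_number X Gs \<epsilon> < \<infinity>"
  obtains C where "finite C" "\<forall>c\<in>C. continuous_on X c"
    "\<forall>g\<in>Gs. \<exists>c\<in>C. \<forall>x\<in>X. \<bar>g x - c x\<bar> \<le> \<epsilon>"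
    "enat (card C) = covering_number X Gs \<epsilon>"
proof -
  define S where "S = {enat (card C) | C. finite C \<and> (\<forall>c\<in>C. continuous_on X c) \<and>
      (\<forall>g\<in>Gs. \<exists>c\<in>C. \<forall>x\<in>X. \<bar>g x - c x\<bar> \<le> \<epsilon>)}"
  have cn: "covering_number X Gs \<epsilon> = Inf S" by (simp add: covering_number_def S_def)
  have "S \<noteq> {}" using assms cn by (auto simp: Inf_enat_def)
  then obtain s0 where s0: "s0 \<in> S" by blast
  have "Inf S \<in> S" unfolding Inf_enat_def using \<open>S \<noteq> {}\<close> LeastI[of "\<lambda>x. x \<in> S" s0, OF s0] by simp
  have gen: "\<exists>C. s = enat (card C) \<and> finite C \<and> (\<forall>c\<in>C. continuous_on X c) \<and>
      (\<forall>g\<in>Gs. \<exists>c\<in>C. \<forall>x\<in>X. \<bar>g x - c x\<bar> \<le> \<epsilon>)" if "s \<in> S" for s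
    using that unfolding S_def by blast
  from gen[OF \<open>Inf S \<in> S\<close>] obtain C where C: "Inf S = enat (card C)" "finite C" "\<forall>c\<in>C. continuous_on X c"
    "\<forall>g\<in>Gs. \<exists>c\<in>C. \<forall>x\<in>X. \<bar>g x - c x\<bar> \<le> \<epsilon>"
    by blast
  show ?thesis by (rule that[OF C(2-4)]) (simp add: C(1) cn)
qed

lemma meas_from_approx:
  fixes f :: "real^'d \<Rightarrow> real"
  assumes out: "\<forall>x. x \<notin> unit_cube \<longrightarrow> f x = 0"
    and approx: "\<And>e. e > 0 \<Longrightarrow> \<exists>g. continuous_on unit_cube g \<and> (\<forall>x\<in>unit_cube. \<bar>f x - g x\<bar> \<le> e)"
  shows "f \<in> borel_measurable borel"
proof -
  have "\<forall>n. \<exists>g. continuous_on unit_cube g \<and> (\<forall>x\<in>unit_cube. \<bar>f x - g x\<bar> \<le> inverse (real (Suc n)))"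
    using approx by simp
  then obtain gs where gs: "\<And>n. continuous_on unit_cube (gs n)"
    "\<And>n x. x \<in> unit_cube \<Longrightarrow> \<bar>f x - gs n x\<bar> \<le> inverse (real (Suc n))"
    by metis
  define u where "u n x = (if x \<in> unit_cube then gs n x else 0)" for n x
  have um: "u n \<in> borel_measurable borel" for n
    unfolding u_def[abs_def]
    by (rule borel_measurable_continuous_on_if) (auto intro: gs(1) continuous_on_const)
  have lim: "(\<lambda>n. u n x) \<longlonglongrightarrow> f x" for x
  proof (cases "x \<in> unit_cube")
    case True
    have "(\<lambda>n. f x - u n x) \<longlonglongrightarrow> 0"
    proof (rule Lim_null_comparison[OF _ LIMSEQ_inverse_real_of_nat])
      show "\<forall>\<^sub>F n in sequentially. norm (f x - u n x) \<le> inverse (real (Suc n))"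
        using gs(2)[OF True] True by (simp add: u_def)
    qed
    then have "(\<lambda>n. f x - (f x - u n x)) \<longlonglongrightarrow> f x - 0" by (intro tendsto_diff tendsto_const)
    then show ?thesis by simp
  next
    case False
    then show ?thesis using out by (simp add: u_def)
  qed
  show ?thesis by (rule borel_measurable_LIMSEQ_real[OF lim um]) 
qed




lemma proj1_meas[measurable]:
  assumes [measurable]: "g \<in> borel_measurable M"
  shows "proj1 g \<in> borel_measurable M"
  unfolding proj1_def[abs_def] by measurable

context hs begin

lemma Gm_one:
  fixes m :: nat
  shows "measure (PiM {..<m} (\<lambda>_. \<rho>)) {D \<in> space (PiM {..<m} (\<lambda>_. \<rho>)). \<forall>i\<in>{..<m}. D i \<in> G} = 1"
proof -
  interpret P: prob_space \<rho> by (fact prob)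
  interpret PP: product_prob_space "\<lambda>_. \<rho>" "{..<m}" by unfold_locales
  interpret PI: prob_space "PiM {..<m} (\<lambda>_. \<rho>)" by (rule prob_space_PiM) (simp add: prob)
  have G1: "emeasure \<rho> G = 1"
  proof -
    have "measure \<rho> G = 1" using AE_G P.AE_in_set_eq_1[of G] by (simp add: sets_\<rho>)
    then show ?thesis by (simp add: P.emeasure_eq_measure)
  qed
  have "emeasure (PiM {..<m} (\<lambda>_. \<rho>)) {D \<in> space (PiM {..<m} (\<lambda>_. \<rho>)). \<forall>i\<in>{..<m}. D i \<in> G}
      = (\<Prod>i\<in>{..<m}. emeasure \<rho> G)"
    by (rule PP.emeasure_PiM_Collect) (auto simp: sets_\<rho> G_borel)
  also have "\<dots> = 1" by (simp add: G1)
  finally show ?thesis by (simp add: measure_def)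
qed

end

theorem proposition5:
  fixes \<rho> :: "((real ^ 'd) \<times> real) measure"
    and \<eta> :: "real ^ 'd \<Rightarrow> real"
    and q :: real
    and K :: "real ^ 'd \<Rightarrow> real ^ 'd \<Rightarrow> real"
    and \<A> :: real
    and \<psi> :: "real \<Rightarrow> real"
    and f\<rho> :: "real ^ 'd \<Rightarrow> real"
    and \<theta> C4 :: real
  assumes prob: "prob_space \<rho>"
    and sets_\<rho>: "sets \<rho> = sets borel"
    and support: "measure \<rho> (unit_cube \<times> {-1, 1}) = 1"
    and \<eta>_meas: "\<eta> \<in> borel_measurable borel"
    and \<eta>_range: "\<forall>x\<in>unit_cube. 0 \<le> \<eta> x \<and> \<eta> x \<le> 1"
    and \<eta>_cond: "\<forall>A\<in>sets borel. measure \<rho> (A \<times> {1}) =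
                   (\<integral>x. indicator A x * \<eta> x \<partial>(distr \<rho> borel fst))"
    and q_pos: "0 < q"
    and tsyb: "tsybakov (distr \<rho> borel fst) unit_cube \<eta> q"
    and mercer: "mercer_kernel unit_cube K"
    and A_pos: "0 < \<A>"
    and \<psi>_pos: "\<forall>u>0. 0 < \<psi> u"
    and \<psi>_decr: "\<forall>u v. 0 < u \<and> u \<le> v \<longrightarrow> \<psi> v \<le> \<psi> u"
    and \<psi>_cont: "continuous_on {0<..} \<psi>"
    and cover: "\<forall>\<epsilon>>0. covering_number unit_cube (rkhs_ball unit_cube K 1) \<epsilon> < \<infinity> \<and>
                  ln (real (the_enat (covering_number unit_cube (rkhs_ball unit_cube K 1) \<epsilon>)))
                    \<le> \<A> * \<psi> \<epsilon>"
    and f\<rho>_meas: "f\<rho> \<in> borel_measurable borel"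
    and f\<rho>_min: "\<forall>x\<in>unit_cube. \<forall>t.
                   \<eta> x * hinge (f\<rho> x) + (1 - \<eta> x) * hinge (- f\<rho> x)
                     \<le> \<eta> x * hinge t + (1 - \<eta> x) * hinge (- t)"
    and \<theta>_pos: "0 < \<theta>"
    and C4_pos: "0 < C4"
  shows "\<exists>C7. \<forall>(m::nat) (lam::real) (\<delta>::real)
            (fD :: (nat \<Rightarrow> (real ^ 'd) \<times> real) \<Rightarrow> real ^ 'd \<Rightarrow> real).
     0 < m \<and> 0 < lam \<and> 0 < \<delta> \<and> \<delta> < 1 \<and>
     ((\<A> * \<psi> (sqrt lam * real m powr (- \<theta>)) + 1) / real m) powr ((q + 1) / (q + 2))
        \<ge> C4 * real m powr (- \<theta>) \<and>
     (\<forall>D. in_rkhs unit_cube K (fD D) \<and>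
        (\<forall>g. in_rkhs unit_cube K g \<longrightarrow>
           emp_error m D hinge (fD D) + lam * (rkhs_norm unit_cube K (fD D))\<^sup>2
             \<le> emp_error m D hinge g + lam * (rkhs_norm unit_cube K g)\<^sup>2))
     \<longrightarrow>
     (\<exists>S \<in> sets (PiM {..<m} (\<lambda>_. \<rho>)).
        S \<subseteq> {D. (gen_error \<rho> hinge (proj1 (fD D)) - gen_error \<rho> hinge f\<rho>)
                  - (emp_error m D hinge (proj1 (fD D)) - emp_error m D hinge f\<rho>)
               \<le> q / (2 * q + 2) * 2 powr ((q + 1) / (2 * q))
                   * (gen_error \<rho> hinge (proj1 (fD D)) - gen_error \<rho> hinge f\<rho>)
                 + C7 * ((\<A> * \<psi> (sqrt lam * real m powr (- \<theta>)) + 1) / real m)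
                          powr ((q + 1) / (q + 2)) * ln (4 / \<delta>)} \<and>
        measure (PiM {..<m} (\<lambda>_. \<rho>)) S \<ge> 1 - \<delta> / 2)"
proof -
  interpret hs \<rho> \<eta> f\<rho>
    by (rule hs.intro[OF prob sets_\<rho> support \<eta>_meas \<eta>_range \<eta>_cond f\<rho>_meas f\<rho>_min])
  interpret P: prob_space \<rho> by (fact prob)
  interpret PX: prob_space \<rho>X by (fact prob_\<rho>X)
  from tsyb obtain \<kappa> where \<kappa>p: "0 < \<kappa>"
    and tsy: "\<forall>t>0. measure \<rho>X {x\<in>unit_cube. \<bar>2 * \<eta> x - 1\<bar> \<le> \<kappa> * t} \<le> t powr q"
    unfolding tsybakov_def \<rho>X_def by blast
  define Cq where "Cq = q / (2 * q + 2) * 2 powr ((q + 1) / (2 * q))"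
  have Cqp: "0 < Cq" unfolding Cq_def using q_pos by (intro mult_pos_pos divide_pos_pos) auto
  define K2 where "K2 = 4 + 2 / (\<kappa> * Cq)"
  define C7 where "C7 = max 4 ((Cq + 2) / C4 + K2 + 8)"
  show ?thesis
  proof (rule exI[of _ C7], intro allI impI)
    fix m :: nat and lam \<delta> :: real and fD :: "(nat \<Rightarrow> (real ^ 'd) \<times> real) \<Rightarrow> real ^ 'd \<Rightarrow> real"
    assume H: "0 < m \<and> 0 < lam \<and> 0 < \<delta> \<and> \<delta> < 1 \<and>
     ((\<A> * \<psi> (sqrt lam * real m powr (- \<theta>)) + 1) / real m) powr ((q + 1) / (q + 2))
        \<ge> C4 * real m powr (- \<theta>) \<and>
     (\<forall>D. in_rkhs unit_cube K (fD D) \<and>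
        (\<forall>g. in_rkhs unit_cube K g \<longrightarrow>
           emp_error m D hinge (fD D) + lam * (rkhs_norm unit_cube K (fD D))\<^sup>2
             \<le> emp_error m D hinge g + lam * (rkhs_norm unit_cube K g)\<^sup>2))"
    have m0: "0 < m" using H by blast
    have l0: "0 < lam" using H by blast
    have d0: "0 < \<delta>" using H by blast
    have d1: "\<delta> < 1" using H by blast
    have Bc: "((\<A> * \<psi> (sqrt lam * real m powr (- \<theta>)) + 1) / real m) powr ((q + 1) / (q + 2))
        \<ge> C4 * real m powr (- \<theta>)" using H by blast
    have minim: "in_rkhs unit_cube K (fD D) \<and>
        (\<forall>g. in_rkhs unit_cube K g \<longrightarrow>
           emp_error m D hinge (fD D) + lam * (rkhs_norm unit_cube K (fD D))\<^sup>2
             \<le> emp_error m D hinge g + lam * (rkhs_norm unit_cube K g)\<^sup>2)" for D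
      using H by blast
    define P where "P = PiM {..<m} (\<lambda>_. \<rho>)"
    interpret PP: prob_space P unfolding P_def by (rule prob_space_PiM) (simp add: prob)
    define p where "p = (q + 1) / (q + 2)"
    have p0: "0 < p" and p1: "p \<le> 1" using q_pos by (auto simp: p_def)
    define \<epsilon>0 where "\<epsilon>0 = real m powr (- \<theta>)"
    have \<epsilon>0p: "0 < \<epsilon>0" using m0 by (simp add: \<epsilon>0_def)
    define r where "r = sqrt lam * \<epsilon>0"
    have rp: "0 < r" using l0 \<epsilon>0p by (simp add: r_def)
    define L where "L = \<A> * \<psi> r"
    have L0: "0 < L" using A_pos \<psi>_pos rp by (simp add: L_def)
    define B where "B = ((L + 1) / real m) powr p"
    have B0: "0 < B" using L0 m0 by (simp add: B_def)
    have BC4: "C4 * \<epsilon>0 \<le> B" using Bc by (simp add: B_def L_def r_def \<epsilon>0_def p_def)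
    define \<Lambda> where "\<Lambda> = ln (4 / \<delta>)"
    have \<Lambda>1: "1 \<le> \<Lambda>"
    proof -
      have "exp 1 \<le> 4 / \<delta>"
      proof -
        have "exp 1 \<le> (3::real)" by (rule exp_le)
        also have "3 \<le> 4 / \<delta>" using d0 d1 by (simp add: le_divide_eq)
        finally show ?thesis .
      qed
      then show ?thesis unfolding \<Lambda>_def using d0 by (subst ln_ge_iff) auto
    qed
    have cov_r: "covering_number unit_cube (rkhs_ball unit_cube K 1) r < \<infinity>" using cover rp by blast
    obtain C where Cfin: "finite C" and Ccont: "\<forall>c\<in>C. continuous_on unit_cube c"
      and Ccov: "\<forall>g\<in>rkhs_ball unit_cube K 1. \<exists>c\<in>C. \<forall>x\<in>unit_cube. \<bar>g x - c x\<bar> \<le> r"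
      and Ccard: "enat (card C) = covering_number unit_cube (rkhs_ball unit_cube K 1) r"
      using cover_obtain[OF cov_r] by blast
    define N where "N = card C"
    have lnN: "ln (real N) \<le> L"
    proof -
      have "ln (real (the_enat (covering_number unit_cube (rkhs_ball unit_cube K 1) r))) \<le> \<A> * \<psi> r"
        using cover rp by blast
      moreover have "the_enat (covering_number unit_cube (rkhs_ball unit_cube K 1) r) = N"
        unfolding N_def by (metis Ccard the_enat.simps)
      ultimately show ?thesis by (simp add: L_def)
    qed
    have N1: "1 \<le> N"
    proof -
      have "(\<lambda>_. 0) \<in> rkhs_ball unit_cube K 1"
        by (simp add: rkhs_ball_def in_rkhs_zero rkhs_norm_zero)
      then have "C \<noteq> {}" using Ccov by blast
      then show ?thesis using Cfin by (simp add: N_def Suc_le_eq card_gt_0_iff)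
    qed
    define gc where "gc c = (\<lambda>x. if x \<in> unit_cube then c x / sqrt lam else 0)" for c :: "real^'d \<Rightarrow> real"
    define hc where "hc c = proj1 (gc c)" for c
    have gcm: "gc c \<in> borel_measurable borel" if "c \<in> C" for c
      unfolding gc_def
      by (rule borel_measurable_continuous_on_if)
         (use l0 in \<open>auto intro!: continuous_intros simp: Ccont that\<close>)
    have hcm: "hc c \<in> borel_measurable borel" if "c \<in> C" for c
      unfolding hc_def using gcm[OF that] by (rule proj1_meas)
    have hcb: "\<bar>hc c x\<bar> \<le> 1" for c x by (simp add: hc_def proj1_bound)
    define a where "a = ln (2 * real N / \<delta>) / real m"
    have ap: "0 < a"
    proof -
      have "1 < 2 * real N / \<delta>" using N1 d0 d1 by (simp add: less_divide_eq)
      then show ?thesis using m0 by (simp add: a_def)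
    qed
    define t where "t = a powr (1 / (q + 2))"
    define V where "V c = 4 * t powr q + 2 * \<Delta> (hc c) / (\<kappa> * t)" for c
    define eps where "eps c = 2 * sqrt (V c * a) + 8 * a" for c
    define \<xi> where "\<xi> h D = (\<Sum>i<m. ys (D i) * (fs (fst (D i)) - h (fst (D i))))" for h D
    define Bad where "Bad c = {D \<in> space P. real m * eps c \<le> (\<Sum>i<m. \<Delta> (hc c) - ys (D i) * (fs (fst (D i)) - hc c (fst (D i))))}" for c
    define Gm where "Gm = {D \<in> space P. \<forall>i\<in>{..<m}. D i \<in> G}"
    define S where "S = Gm - (\<Union>c\<in>C. Bad c)"
    have Bad_sets: "Bad c \<in> sets P" if "c \<in> C" for c
    proof -
      have [measurable]: "hc c \<in> borel_measurable borel" by (rule hcm[OF that])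
      have cm: "(\<lambda>D. D i) \<in> P \<rightarrow>\<^sub>M borel" if "i \<in> {..<m}" for i
      proof -
        have "(\<lambda>D. D i) \<in> P \<rightarrow>\<^sub>M \<rho>" unfolding P_def using that by (rule measurable_component_singleton)
        then show ?thesis by (simp add: meas_\<rho>[symmetric] measurable_cong_sets[OF refl sets_\<rho>])
      qed
      have fm: "(\<lambda>D. \<Sum>i<m. \<Delta> (hc c) - ys (D i) * (fs (fst (D i)) - hc c (fst (D i)))) \<in> borel_measurable P"
      proof (rule borel_measurable_sum)
        fix i assume "i \<in> {..<m}"
        have "(\<lambda>z. \<Delta> (hc c) - ys z * (fs (fst z) - hc c (fst z))) \<in> borel_measurable borel" by measurable
        from measurable_compose[OF cm[OF \<open>i \<in> {..<m}\<close>] this]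
        show "(\<lambda>D. \<Delta> (hc c) - ys (D i) * (fs (fst (D i)) - hc c (fst (D i)))) \<in> borel_measurable P" .
      qed
      show ?thesis unfolding Bad_def using fm by measurable
    qed
    have Gm_sets: "Gm \<in> sets P"
    proof -
      have "Gm = {D \<in> space P. \<forall>i\<in>{..<m}. D i \<in> G}" by (simp add: Gm_def)
      moreover have "{D \<in> space P. \<forall>i\<in>{..<m}. D i \<in> G} \<in> sets P"
      proof (rule sets.sets_Collect_finite_All)
        fix i assume i: "i \<in> {..<m}"
        have "(\<lambda>D. D i) \<in> P \<rightarrow>\<^sub>M \<rho>" unfolding P_def using i by (rule measurable_component_singleton)
        from measurable_sets[OF this, of G] have "(\<lambda>D. D i) -` G \<inter> space P \<in> sets P" by (simp add: sets_\<rho>)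
        moreover have "{D \<in> space P. D i \<in> G} = (\<lambda>D. D i) -` G \<inter> space P" by auto
        ultimately show "{D \<in> space P. D i \<in> G} \<in> sets P" by simp
      qed simp
      ultimately show ?thesis by simp
    qed
    have S_sets: "S \<in> sets P" unfolding S_def using Gm_sets Bad_sets Cfin by auto
    have Gm1: "measure P Gm = 1" unfolding Gm_def P_def by (rule Gm_one)
    have Badm: "measure P (Bad c) \<le> \<delta> / (2 * real N)" if "c \<in> C" for c
    proof -
      have "measure P (Bad c) \<le> exp (- (real m * a))"
        unfolding Bad_def P_def eps_def
        by (rule bern_app[OF hcm[OF that] hcb \<kappa>p tsy ap t_def V_def])
      also have "real m * a = ln (2 * real N / \<delta>)" using m0 by (simp add: a_def)
      also have "exp (- ln (2 * real N / \<delta>)) = \<delta> / (2 * real N)"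
        using N1 d0 by (simp add: exp_minus)
      finally show ?thesis .
    qed
    have PS: "1 - \<delta> / 2 \<le> measure P S"
    proof -
      have "space P - S \<subseteq> (space P - Gm) \<union> (\<Union>c\<in>C. Bad c)" by (auto simp: S_def)
      then have "measure P (space P - S) \<le> measure P ((space P - Gm) \<union> (\<Union>c\<in>C. Bad c))"
        using Gm_sets Bad_sets Cfin by (intro PP.finite_measure_mono) auto
      also have "\<dots> \<le> measure P (space P - Gm) + measure P (\<Union>c\<in>C. Bad c)"
        using Gm_sets Bad_sets Cfin by (intro measure_subadditive) (auto simp: PP.emeasure_eq_measure)
      also have "measure P (space P - Gm) = 0" using PP.prob_compl[OF Gm_sets] Gm1 by simp
      also have "measure P (\<Union>c\<in>C. Bad c) \<le> (\<Sum>c\<in>C. measure P (Bad c))"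
        using Bad_sets Cfin by (intro PP.finite_measure_subadditive_finite) auto
      also have "\<dots> \<le> (\<Sum>c\<in>C. \<delta> / (2 * real N))" by (intro sum_mono Badm)
      also have "\<dots> = \<delta> / 2" using N1 by (simp add: N_def)
      finally have "measure P (space P - S) \<le> \<delta> / 2" by simp
      then show ?thesis using PP.prob_compl[OF S_sets] by simp
    qed
    have Ssub: "S \<subseteq> {D. (gen_error \<rho> hinge (proj1 (fD D)) - gen_error \<rho> hinge f\<rho>)
                  - (emp_error m D hinge (proj1 (fD D)) - emp_error m D hinge f\<rho>)
               \<le> q / (2 * q + 2) * 2 powr ((q + 1) / (2 * q))
                   * (gen_error \<rho> hinge (proj1 (fD D)) - gen_error \<rho> hinge f\<rho>)
                 + C7 * ((\<A> * \<psi> (sqrt lam * real m powr (- \<theta>)) + 1) / real m)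
                          powr ((q + 1) / (q + 2)) * ln (4 / \<delta>)}"
    proof
      fix D assume DS: "D \<in> S"
      have DGm: "D \<in> Gm" and DnB: "\<And>c. c \<in> C \<Longrightarrow> D \<notin> Bad c" using DS by (auto simp: S_def)
      have Dsp: "D \<in> space P" using DGm by (simp add: Gm_def)
      have DG: "\<And>i. i < m \<Longrightarrow> D i \<in> G" using DGm by (simp add: Gm_def)
      define f where "f = fD D"
      have finr: "in_rkhs unit_cube K f" using minim[of D] by (simp add: f_def)
      have fmin: "emp_error m D hinge f + lam * (rkhs_norm unit_cube K f)\<^sup>2
          \<le> emp_error m D hinge (\<lambda>_. 0) + lam * (rkhs_norm unit_cube K (\<lambda>_. 0))\<^sup>2"
        using minim[of D] in_rkhs_zero[of unit_cube K] unfolding f_def by blast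
      have emp0: "emp_error m D hinge (\<lambda>_. 0) = 1" using m0 by (simp add: emp_error_def hinge_def)
      have empnn: "0 \<le> emp_error m D hinge f" by (simp add: emp_error_def hinge_nonneg sum_nonneg)
      have nsq: "lam * (rkhs_norm unit_cube K f)\<^sup>2 \<le> 1" using fmin emp0 empnn by (simp add: rkhs_norm_zero)
      have nn: "0 \<le> rkhs_norm unit_cube K f" by (rule rkhs_norm_nonneg[OF finr])
      have sl: "0 < sqrt lam" using l0 by simp
      have sn: "sqrt lam * rkhs_norm unit_cube K f \<le> 1"
      proof -
        have "(sqrt lam * rkhs_norm unit_cube K f)\<^sup>2 \<le> 1\<^sup>2" using nsq l0 by (simp add: power_mult_distrib)
        then show ?thesis by (rule power2_le_imp_le) simp
      qed
      have fball: "(\<lambda>x. sqrt lam * f x) \<in> rkhs_ball unit_cube K 1"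
        by (rule rkhs_scale[OF finr _ sn]) (use sl in simp)
      obtain c where cC: "c \<in> C" and cclose: "\<forall>x\<in>unit_cube. \<bar>sqrt lam * f x - c x\<bar> \<le> r"
        using bspec[OF Ccov fball] by auto
      have fout: "\<forall>x. x \<notin> unit_cube \<longrightarrow> f x = 0" using finr by (simp add: in_rkhs_def)
      have close: "\<bar>proj1 f x - hc c x\<bar> \<le> \<epsilon>0" for x
      proof (cases "x \<in> unit_cube")
        case True
        have "\<bar>proj1 f x - hc c x\<bar> \<le> \<bar>f x - gc c x\<bar>" unfolding hc_def by (rule proj1_lip)
        also have "f x - gc c x = (sqrt lam * f x - c x) / sqrt lam"
          using True sl by (simp add: gc_def field_simps)
        also have "\<bar>(sqrt lam * f x - c x) / sqrt lam\<bar> = \<bar>sqrt lam * f x - c x\<bar> / sqrt lam"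
          using sl by simp
        also have "\<dots> \<le> r / sqrt lam" using cclose True sl by (intro divide_right_mono) auto
        also have "\<dots> = \<epsilon>0" using sl by (simp add: r_def)
        finally show ?thesis .
      next
        case False then show ?thesis using fout \<epsilon>0p by (simp add: hc_def gc_def proj1_def)
      qed
      have fmeas: "f \<in> borel_measurable borel"
      proof (rule meas_from_approx[OF fout])
        fix e :: real assume e: "0 < e"
        have "covering_number unit_cube (rkhs_ball unit_cube K 1) (e * sqrt lam) < \<infinity>"
          using cover mult_pos_pos[OF e sl] by blast
        then obtain C' where "finite C'" and C'1: "\<forall>c\<in>C'. continuous_on unit_cube c"
          and C'2: "\<forall>g\<in>rkhs_ball unit_cube K 1. \<exists>c\<in>C'. \<forall>x\<in>unit_cube. \<bar>g x - c x\<bar> \<le> e * sqrt lam"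
          and "enat (card C') = covering_number unit_cube (rkhs_ball unit_cube K 1) (e * sqrt lam)"
          by (rule cover_obtain)
        obtain c' where c'1: "c' \<in> C'" and c'2: "\<forall>x\<in>unit_cube. \<bar>sqrt lam * f x - c' x\<bar> \<le> e * sqrt lam"
          using bspec[OF C'2 fball] by auto
        show "\<exists>g. continuous_on unit_cube g \<and> (\<forall>x\<in>unit_cube. \<bar>f x - g x\<bar> \<le> e)"
        proof (intro exI conjI ballI)
          show "continuous_on unit_cube (\<lambda>x. c' x / sqrt lam)"
            using C'1 c'1 sl by (auto intro!: continuous_intros)
          fix x :: "real^'d" assume x: "x \<in> unit_cube"
          have "f x - c' x / sqrt lam = (sqrt lam * f x - c' x) / sqrt lam" using sl by (simp add: field_simps)
          then have "\<bar>f x - c' x / sqrt lam\<bar> = \<bar>sqrt lam * f x - c' x\<bar> / sqrt lam" using sl by simp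
          also have "\<dots> \<le> (e * sqrt lam) / sqrt lam" using c'2 x sl by (intro divide_right_mono) auto
          also have "\<dots> = e" using sl by simp
          finally show "\<bar>f x - c' x / sqrt lam\<bar> \<le> e" .
        qed
      qed
      define pf where "pf = proj1 f"
      have pfm[measurable]: "pf \<in> borel_measurable borel" unfolding pf_def by (rule proj1_meas[OF fmeas])
      have pfb: "\<bar>pf x\<bar> \<le> 1" for x by (simp add: pf_def proj1_bound)
      have hcmc[measurable]: "hc c \<in> borel_measurable borel" by (rule hcm[OF cC])
      have cl: "\<bar>hc c x - pf x\<bar> \<le> \<epsilon>0" for x using close[of x] by (simp add: pf_def abs_minus_commute)
      define Df where "Df = \<Delta> pf"
      define Dc where "Dc = \<Delta> (hc c)"
      define Ef where "Ef = \<xi> pf D / real m"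
      define Ec where "Ec = \<xi> (hc c) D / real m"
      have gdiff: "gen_error \<rho> hinge (proj1 (fD D)) - gen_error \<rho> hinge f\<rho> = Df"
        using gen_diff[OF pfm pfb] by (simp add: Df_def pf_def f_def)
      have ediff: "emp_error m D hinge (proj1 (fD D)) - emp_error m D hinge f\<rho> = Ef"
        using emp_diff[of pf m D, OF pfb DG] by (simp add: Ef_def \<xi>_def pf_def f_def)
      have Df0: "0 \<le> Df" unfolding Df_def by (rule \<Delta>_nonneg[OF pfm pfb])
      have Df2: "Df \<le> 2" unfolding Df_def by (rule \<Delta>_le2[OF pfm pfb])
      have Dc0: "0 \<le> Dc" unfolding Dc_def by (rule \<Delta>_nonneg[OF hcmc hcb])
      have DfDc: "\<bar>Df - Dc\<bar> \<le> \<epsilon>0"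
      proof -
        have b1: "\<bar>fs x - pf x\<bar> \<le> 2" for x using fs_bound[of x] pfb[of x] by linarith
        have b2: "\<bar>fs x - hc c x\<bar> \<le> 2" for x using fs_bound[of x] hcb[of c x] by linarith
        have b3: "\<bar>hc c x - pf x\<bar> \<le> 2" for x using hcb[of c x] pfb[of x] by linarith
        have i1: "integrable \<rho>X (\<lambda>x. (2 * \<eta> x - 1) * (fs x - pf x))"
          by (rule int_\<rho>X_AE[where B=2]) (auto intro!: abs_mult_le1 eta_abs b1)
        have i2: "integrable \<rho>X (\<lambda>x. (2 * \<eta> x - 1) * (fs x - hc c x))"
          by (rule int_\<rho>X_AE[where B=2]) (auto intro!: abs_mult_le1 eta_abs b2)
        have i3: "integrable \<rho>X (\<lambda>x. (2 * \<eta> x - 1) * (hc c x - pf x))"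
          by (rule int_\<rho>X_AE[where B=2]) (auto intro!: abs_mult_le1 eta_abs b3)
        have "Df - Dc = (\<integral>x. (2 * \<eta> x - 1) * (fs x - pf x) - (2 * \<eta> x - 1) * (fs x - hc c x) \<partial>\<rho>X)"
          unfolding Df_def Dc_def \<Delta>_def using i1 i2 by simp
        also have "\<dots> = (\<integral>x. (2 * \<eta> x - 1) * (hc c x - pf x) \<partial>\<rho>X)"
          by (intro Bochner_Integration.integral_cong refl) (simp add: algebra_simps)
        finally have eq: "Df - Dc = (\<integral>x. (2 * \<eta> x - 1) * (hc c x - pf x) \<partial>\<rho>X)" .
        have pw: "\<bar>(2 * \<eta> x - 1) * (hc c x - pf x)\<bar> \<le> \<epsilon>0" if "x \<in> unit_cube" for x
          by (intro abs_mult_le1 eta_abs that cl)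
        have up: "(\<integral>x. (2 * \<eta> x - 1) * (hc c x - pf x) \<partial>\<rho>X) \<le> (\<integral>x. \<epsilon>0 \<partial>\<rho>X)"
        proof (rule integral_mono_AE[OF i3])
          show "AE x in \<rho>X. (2 * \<eta> x - 1) * (hc c x - pf x) \<le> \<epsilon>0"
            using AE_X by eventually_elim (use pw in fastforce)
        qed simp
        have lo: "(\<integral>x. - \<epsilon>0 \<partial>\<rho>X) \<le> (\<integral>x. (2 * \<eta> x - 1) * (hc c x - pf x) \<partial>\<rho>X)"
        proof (rule integral_mono_AE[OF _ i3])
          show "AE x in \<rho>X. - \<epsilon>0 \<le> (2 * \<eta> x - 1) * (hc c x - pf x)"
            using AE_X by eventually_elim (use pw in fastforce)
        qed simp
        show ?thesis using up lo eq by (simp add: PX.prob_space abs_le_iff)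
      qed
      have EfEc: "\<bar>Ef - Ec\<bar> \<le> \<epsilon>0"
      proof -
        have "\<xi> pf D - \<xi> (hc c) D = (\<Sum>i<m. ys (D i) * (hc c (fst (D i)) - pf (fst (D i))))"
          by (simp add: \<xi>_def sum_subtractf[symmetric] algebra_simps)
        also have "\<bar>\<dots>\<bar> \<le> (\<Sum>i<m. \<bar>ys (D i) * (hc c (fst (D i)) - pf (fst (D i)))\<bar>)" by (rule sum_abs)
        also have "\<dots> \<le> (\<Sum>i<m. \<epsilon>0)" by (intro sum_mono abs_mult_le1 ys_bound cl)
        also have "\<dots> = real m * \<epsilon>0" by simp
        finally have "\<bar>\<xi> pf D - \<xi> (hc c) D\<bar> \<le> real m * \<epsilon>0" .
        moreover have "Ef - Ec = (\<xi> pf D - \<xi> (hc c) D) / real m" by (simp add: Ef_def Ec_def diff_divide_distrib)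
        ultimately show ?thesis using m0 by (simp add: divide_le_eq mult.commute)
      qed
      have notbad: "Dc - Ec < eps c"
      proof -
        have "\<not> (real m * eps c \<le> (\<Sum>i<m. Dc - ys (D i) * (fs (fst (D i)) - hc c (fst (D i)))))"
          using DnB[OF cC] Dsp by (simp add: Bad_def Dc_def)
        moreover have "(\<Sum>i<m. Dc - ys (D i) * (fs (fst (D i)) - hc c (fst (D i)))) = real m * Dc - \<xi> (hc c) D"
          by (simp add: \<xi>_def sum_subtractf)
        moreover have "\<xi> (hc c) D = real m * Ec" using m0 by (simp add: Ec_def)
        ultimately have "real m * (Dc - Ec) < real m * eps c" by (simp add: algebra_simps)
        then show ?thesis using m0 by simp
      qed
      have epsb: "eps c \<le> Cq * Dc + K2 * a powr p + 8 * a"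
      proof -
        have "2 * sqrt ((4 * (a powr (1/(q+2))) powr q + 2 * Dc / (\<kappa> * a powr (1/(q+2)))) * a)
            \<le> Cq * Dc + (4 + 2/(\<kappa>*Cq)) * a powr ((q+1)/(q+2))"
          by (rule eps_rate[OF q_pos ap \<kappa>p Dc0 Cqp])
        then show ?thesis by (simp add: eps_def V_def t_def Dc_def K2_def p_def)
      qed
      have S2: "Df - Ef \<le> Cq * Df + (Cq + 2) * \<epsilon>0 + K2 * a powr p + 8 * a"
      proof -
        have "Cq * Dc \<le> Cq * (Df + \<epsilon>0)" using DfDc Cqp by (intro mult_left_mono) auto
        then show ?thesis using DfDc EfEc notbad epsb by (simp add: algebra_simps abs_le_iff)
      qed
      have aL: "a \<le> (L + 1) / real m * \<Lambda>"
      proof -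
        have "ln (2 * real N / \<delta>) = ln (real N) + ln (2 / \<delta>)"
        proof -
          have eqN: "2 * real N / \<delta> = real N * (2 / \<delta>)" by simp
          have pN: "0 < real N" "0 < 2 / \<delta>" using N1 d0 by auto
          show ?thesis unfolding eqN ln_mult using pN by simp
        qed
        also have "ln (2 / \<delta>) \<le> \<Lambda>" unfolding \<Lambda>_def using d0 by (simp add: divide_right_mono)
        also note lnN
        finally have "ln (2 * real N / \<delta>) \<le> L + \<Lambda>" by simp
        also have "\<dots> \<le> (L + 1) * \<Lambda>"
        proof -
          have "L \<le> L * \<Lambda>" using L0 \<Lambda>1 by (simp add: mult_le_cancel_left1)
          then show ?thesis by (simp add: algebra_simps)
        qed
        finally have "ln (2 * real N / \<delta>) \<le> (L + 1) * \<Lambda>" .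
        then have "ln (2 * real N / \<delta>) / real m \<le> (L + 1) * \<Lambda> / real m"
          using m0 by (intro divide_right_mono) auto
        moreover have "(L + 1) * \<Lambda> / real m = (L + 1) / real m * \<Lambda>" by simp
        ultimately show ?thesis unfolding a_def by linarith
      qed
      have \<Lambda>p: "\<Lambda> powr p \<le> \<Lambda>"
      proof -
        have "\<Lambda> powr p \<le> \<Lambda> powr 1" using \<Lambda>1 p1 by (intro powr_mono) auto
        then show ?thesis using \<Lambda>1 by simp
      qed
      have C7a: "4 \<le> C7" and C7b: "(Cq + 2) / C4 + K2 + 8 \<le> C7" by (simp_all add: C7_def)
      have goal: "Df - Ef \<le> Cq * Df + C7 * B * \<Lambda>"
      proof (cases "a \<le> 1")
        case True
        have a_le: "a \<le> a powr p"
        proof -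
          have "a powr 1 \<le> a powr p" using ap True p1 by (intro powr_mono') auto
          then show ?thesis using ap by simp
        qed
        have apB: "a powr p \<le> B * \<Lambda>"
        proof -
          have "a powr p \<le> ((L + 1) / real m * \<Lambda>) powr p" using aL ap p0 by (intro powr_mono2) auto
          also have "\<dots> = ((L + 1) / real m) powr p * \<Lambda> powr p" by (rule powr_mult)
          also have "\<dots> \<le> B * \<Lambda>" unfolding B_def using \<Lambda>p by (intro mult_left_mono) auto
          finally show ?thesis .
        qed
        have BL0: "0 \<le> B * \<Lambda>" using B0 \<Lambda>1 by simp
        have e0B: "\<epsilon>0 \<le> B * \<Lambda> / C4"
        proof -
          have "C4 * \<epsilon>0 \<le> B * \<Lambda>" using BC4 B0 \<Lambda>1 by (smt (verit) mult_le_cancel_left1)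
          then show ?thesis using C4_pos by (simp add: le_divide_eq mult.commute)
        qed
        have K2p: "0 \<le> K2" using \<kappa>p Cqp by (simp add: K2_def)
        have t1: "(Cq + 2) * \<epsilon>0 \<le> (Cq + 2) * (B * \<Lambda> / C4)" using e0B Cqp by (intro mult_left_mono) auto
        have t2: "K2 * a powr p \<le> K2 * (B * \<Lambda>)" using apB K2p by (intro mult_left_mono) auto
        have t3: "8 * a \<le> 8 * (B * \<Lambda>)" using a_le apB by simp
        have t4: "((Cq + 2) / C4 + K2 + 8) * (B * \<Lambda>) \<le> C7 * (B * \<Lambda>)" using C7b BL0 by (intro mult_right_mono) auto
        have t5: "((Cq + 2) / C4 + K2 + 8) * (B * \<Lambda>) = (Cq + 2) * (B * \<Lambda> / C4) + K2 * (B * \<Lambda>) + 8 * (B * \<Lambda>)"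
          by (simp add: algebra_simps)
        have "C7 * B * \<Lambda> = C7 * (B * \<Lambda>)" by simp
        then show ?thesis using S2 t1 t2 t3 t4 t5 by linarith
      next
        case False
        have Efb: "- 2 \<le> Ef"
        proof -
          have "\<bar>\<xi> pf D\<bar> \<le> (\<Sum>i<m. \<bar>ys (D i) * (fs (fst (D i)) - pf (fst (D i)))\<bar>)" unfolding \<xi>_def by (rule sum_abs)
          also have "\<dots> \<le> (\<Sum>i<m. 2)"
          proof (intro sum_mono abs_mult_le1 ys_bound)
            fix i show "\<bar>fs (fst (D i)) - pf (fst (D i))\<bar> \<le> 2" using fs_bound[of "fst (D i)"] pfb[of "fst (D i)"] by linarith
          qed
          finally have "\<bar>\<xi> pf D\<bar> \<le> 2 * real m" by simp
          then show ?thesis using m0 by (simp add: Ef_def abs_le_iff le_divide_eq)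
        qed
        have BL1: "1 \<le> B * \<Lambda>"
        proof -
          have "1 < (L + 1) / real m * \<Lambda>" using False aL by simp
          then have "1 / \<Lambda> \<le> (L + 1) / real m" using \<Lambda>1 by (simp add: divide_le_eq mult.commute)
          then have "(1 / \<Lambda>) powr p \<le> B" unfolding B_def using \<Lambda>1 p0 by (intro powr_mono2) auto
          moreover have "(1 / \<Lambda>) powr p = 1 / \<Lambda> powr p" using \<Lambda>1 by (simp add: powr_divide)
          ultimately have "1 / \<Lambda> powr p \<le> B" by simp
          then have "\<Lambda> * (1 / \<Lambda> powr p) \<le> \<Lambda> * B" using \<Lambda>1 by (intro mult_left_mono) auto
          then have "\<Lambda> / \<Lambda> powr p \<le> B * \<Lambda>" by (simp add: mult.commute)
          moreover have "1 \<le> \<Lambda> / \<Lambda> powr p" using \<Lambda>p \<Lambda>1 by simp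
          ultimately show ?thesis by linarith
        qed
        have "4 * 1 \<le> C7 * (B * \<Lambda>)" by (rule mult_mono[OF C7a BL1]) (use C7a in auto)
        moreover have "0 \<le> Cq * Df" using Cqp Df0 by simp
        ultimately show ?thesis using Df2 Efb by (simp add: mult.assoc)
      qed
      have Beq: "((\<A> * \<psi> (sqrt lam * real m powr (- \<theta>)) + 1) / real m) powr ((q + 1) / (q + 2)) = B"
        by (simp add: B_def L_def r_def \<epsilon>0_def p_def)
      have Cqeq: "q / (2 * q + 2) * 2 powr ((q + 1) / (2 * q)) = Cq" by (simp add: Cq_def)
      show "D \<in> {D. (gen_error \<rho> hinge (proj1 (fD D)) - gen_error \<rho> hinge f\<rho>)
                  - (emp_error m D hinge (proj1 (fD D)) - emp_error m D hinge f\<rho>)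
               \<le> q / (2 * q + 2) * 2 powr ((q + 1) / (2 * q))
                   * (gen_error \<rho> hinge (proj1 (fD D)) - gen_error \<rho> hinge f\<rho>)
                 + C7 * ((\<A> * \<psi> (sqrt lam * real m powr (- \<theta>)) + 1) / real m)
                          powr ((q + 1) / (q + 2)) * ln (4 / \<delta>)}"
        unfolding mem_Collect_eq Beq Cqeq gdiff ediff \<Lambda>_def[symmetric] using goal .
    qed
    show "\<exists>S \<in> sets (PiM {..<m} (\<lambda>_. \<rho>)).
        S \<subseteq> {D. (gen_error \<rho> hinge (proj1 (fD D)) - gen_error \<rho> hinge f\<rho>)
                  - (emp_error m D hinge (proj1 (fD D)) - emp_error m D hinge f\<rho>)
               \<le> q / (2 * q + 2) * 2 powr ((q + 1) / (2 * q))
                   * (gen_error \<rho> hinge (proj1 (fD D)) - gen_error \<rho> hinge f\<rho>)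
                 + C7 * ((\<A> * \<psi> (sqrt lam * real m powr (- \<theta>)) + 1) / real m)
                          powr ((q + 1) / (q + 2)) * ln (4 / \<delta>)} \<and>
        measure (PiM {..<m} (\<lambda>_. \<rho>)) S \<ge> 1 - \<delta> / 2"
      using S_sets Ssub PS unfolding P_def by blast
  qed
qed


end
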